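(* Let $G$ be a group of order $k\ge2$. Then, as $n\to\infty$, the $(G,* )$-graded $n$-codimension of $M_k(\mathbb{C})$ equipped with the $G$-crossed-product grading and the transpose involution satisfies $$c^G_n\sim\frac{k}{2^{k-1}}\,k^{2n}.$$
   Context: Let $G=\{g_1=e,\dots,g_k\}$. Index rows/columns of $k\times k$ matrices by $G$, let $E_{a,b}$ be matrix units, $P_g=\sum_{h\in G}E_{h,hg}$, and $M_k(\mathbb{C})_g=\{DP_g: D\text{ diagonal}\}$ (the $G$-crossed-product grading); the involution $*$ is transpose. $F=\mathbb{Q}\{x_{i,g},x^*_{i,g}: i\ge1,g\in G\}$ is the free associative algebra; $I(G,* )$ is the set of $f\in F$ vanishing under every substitution $x_{i,g}\mapsto A_{i,g}\in M_k(\mathbb{C})_g$, $x^*_{i,g}\mapsto A_{i,g}^T$. $P^G_n$ is the $\mathbb{Q}$-span of the monomials $x^{\epsilon_1}_{\sigma(1),h_1}\cdots x^{\epsilon_n}_{\sigma(n),h_n}$ with $\sigma\in S_n$, $h_i\in G$, each $\epsilon_i\in\{\text{nothing},*\}$, and $c^G_n=\dim_{\mathbb{Q}}P^G_n/(P^G_n\cap I(G,* ))$. $a_n\sim b_n$ means $a_n/b_n\to1$. *)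

theory Defs
  imports "HOL-Algebra.Group" "HOL-Library.Function_Algebras" "HOL-Library.Landau_Symbols" Complex_Main
begin

text \<open>Letters of the free algebra: (i, g, starred) stands for x_{i,g} (starred = False)
  or x^*_{i,g} (starred = True).\<close>

type_synonym 'a letter = "nat \<times> 'a \<times> bool"
type_synonym 'a word = "'a letter list"
type_synonym 'a fpoly = "'a word \<Rightarrow> rat"

definition gletter :: "('a, 'b) monoid_scheme \<Rightarrow> 'a letter \<Rightarrow> bool" where
  "gletter G l \<longleftrightarrow> 1 \<le> fst l \<and> fst (snd l) \<in> carrier G"

definition free_alg :: "('a, 'b) monoid_scheme \<Rightarrow> 'a fpoly set" where
  "free_alg G = {f. finite {w. f w \<noteq> 0} \<and> (\<forall>w. f w \<noteq> 0 \<longrightarrow> (\<forall>l\<in>set w. gletter G l))}"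

text \<open>k x k complex matrices with rows/columns indexed by the elements of G
  (entries outside carrier G x carrier G are zero).\<close>

type_synonym 'a mat = "'a \<Rightarrow> 'a \<Rightarrow> complex"

definition gmat_mult :: "('a, 'b) monoid_scheme \<Rightarrow> 'a mat \<Rightarrow> 'a mat \<Rightarrow> 'a mat" where
  "gmat_mult G X Y = (\<lambda>a b. \<Sum>c\<in>carrier G. X a c * Y c b)"

definition gmat_one :: "('a, 'b) monoid_scheme \<Rightarrow> 'a mat" where
  "gmat_one G = (\<lambda>a b. if a = b \<and> a \<in> carrier G then 1 else 0)"

definition gmat_transpose :: "'a mat \<Rightarrow> 'a mat" where
  "gmat_transpose X = (\<lambda>a b. X b a)"

text \<open>Homogeneous component of degree g of the G-crossed-product grading:
  M_k(C)_g = {D P_g : D diagonal}, where P_g = sum_h E_{h, h g}.\<close>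

definition graded_comp :: "('a, 'b) monoid_scheme \<Rightarrow> 'a \<Rightarrow> 'a mat set" where
  "graded_comp G g = {X. \<exists>d. X = (\<lambda>a b. if a \<in> carrier G \<and> b \<in> carrier G \<and> b = a \<otimes>\<^bsub>G\<^esub> g
                                        then d a else 0)}"

definition graded_subst :: "('a, 'b) monoid_scheme \<Rightarrow> (nat \<Rightarrow> 'a \<Rightarrow> 'a mat) \<Rightarrow> bool" where
  "graded_subst G A \<longleftrightarrow> (\<forall>i g. 1 \<le> i \<longrightarrow> g \<in> carrier G \<longrightarrow> A i g \<in> graded_comp G g)"

definition eval_letter :: "(nat \<Rightarrow> 'a \<Rightarrow> 'a mat) \<Rightarrow> 'a letter \<Rightarrow> 'a mat" where
  "eval_letter A l = (case l of (i, g, s) \<Rightarrow> if s then gmat_transpose (A i g) else A i g)"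

definition eval_word :: "('a, 'b) monoid_scheme \<Rightarrow> (nat \<Rightarrow> 'a \<Rightarrow> 'a mat) \<Rightarrow> 'a word \<Rightarrow> 'a mat" where
  "eval_word G A w = foldr (\<lambda>l M. gmat_mult G (eval_letter A l) M) w (gmat_one G)"

definition eval_poly :: "('a, 'b) monoid_scheme \<Rightarrow> (nat \<Rightarrow> 'a \<Rightarrow> 'a mat) \<Rightarrow> 'a fpoly \<Rightarrow> 'a mat" where
  "eval_poly G A f = (\<lambda>a b. \<Sum>w\<in>{w. f w \<noteq> 0}. of_rat (f w) * eval_word G A w a b)"

definition gid :: "('a, 'b) monoid_scheme \<Rightarrow> 'a fpoly set" where
  "gid G = {f \<in> free_alg G. \<forall>A. graded_subst G A \<longrightarrow>
              (\<forall>a\<in>carrier G. \<forall>b\<in>carrier G. eval_poly G A f a b = 0)}"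

definition mlmon :: "('a, 'b) monoid_scheme \<Rightarrow> nat \<Rightarrow> 'a word set" where
  "mlmon G n = {w. distinct (map fst w) \<and> set (map fst w) = {1..n} \<and> (\<forall>l\<in>set w. fst (snd l) \<in> carrier G)}"

definition Pn :: "('a, 'b) monoid_scheme \<Rightarrow> nat \<Rightarrow> 'a fpoly set" where
  "Pn G n = {f \<in> free_alg G. \<forall>w. f w \<noteq> 0 \<longrightarrow> w \<in> mlmon G n}"

definition qscale :: "rat \<Rightarrow> 'a fpoly \<Rightarrow> 'a fpoly" where
  "qscale c f = (\<lambda>w. c * f w)"

definition qdim :: "'a fpoly set \<Rightarrow> nat" where
  "qdim S = vector_space.dim qscale S"

text \<open>c^G_n = dim_Q P^G_n / (P^G_n \<inter> I(G,*)) = dim P^G_n - dim (P^G_n \<inter> I(G,*))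
  (finite-dimensional spaces).\<close>

definition gcodim :: "('a, 'b) monoid_scheme \<Rightarrow> nat \<Rightarrow> nat" where
  "gcodim G n = qdim (Pn G n) - qdim (Pn G n \<inter> gid G)"

end

theory Submission
  imports Defs
begin

fun trl :: "('a, 'b) monoid_scheme \<Rightarrow> 'a \<Rightarrow> 'a word \<Rightarrow> 'a \<times> (nat \<Rightarrow> 'a \<times> 'a)" where
  "trl G p [] = (p, \<lambda>_. undefined)"
| "trl G p ((i,g,s)#w) = (let q = (if s then p \<otimes>\<^bsub>G\<^esub> inv\<^bsub>G\<^esub> g else p \<otimes>\<^bsub>G\<^esub> g) in
     (fst (trl G q w), (snd (trl G q w))(i := (g, if s then q else p))))"

definition coef :: "('a, 'b) monoid_scheme \<Rightarrow> (nat \<Rightarrow> 'a \<Rightarrow> 'a mat) \<Rightarrow> nat \<Rightarrow> 'a \<Rightarrow> 'a \<Rightarrow> complex" where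
  "coef G A i g x = A i g x (x \<otimes>\<^bsub>G\<^esub> g)"

lemma trl_undef: "i \<notin> fst ` set w \<Longrightarrow> snd (trl G p w) i = undefined"
  by (induction G p w rule: trl.induct) (auto simp: Let_def)

lemma sum_fun_apply: "(\<Sum>x\<in>A. f x) w = (\<Sum>x\<in>A. f x w)"
  by (induction A rule: infinite_finite_induct) auto

context group begin

lemma trl_carrier:
  "p \<in> carrier G \<Longrightarrow> \<forall>l\<in>set w. fst (snd l) \<in> carrier G \<Longrightarrow> fst (trl G p w) \<in> carrier G"
proof (induction w arbitrary: p)
  case (Cons l w) then show ?case by (cases l) (auto simp: Let_def)
qed simp

lemma graded_form:
  assumes "graded_subst G A" "1 \<le> i" "g \<in> carrier G"
  shows "A i g = (\<lambda>a b. if a \<in> carrier G \<and> b \<in> carrier G \<and> b = a \<otimes> g then coef G A i g a else 0)"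
proof -
  from assms obtain d where d: "A i g = (\<lambda>a b. if a \<in> carrier G \<and> b \<in> carrier G \<and> b = a \<otimes> g then d a else 0)"
    unfolding graded_subst_def graded_comp_def by blast
  show ?thesis by (rule ext)+ (auto simp: d coef_def)
qed

lemma sum_single:
  assumes "finite (carrier G)" "q \<in> carrier G"
  shows "(\<Sum>c\<in>carrier G. (if c = q then X c else 0)) = (X q :: complex)"
  using assms by (simp add: sum.delta')

lemma step_iff:
  assumes "a \<in> carrier G" "c \<in> carrier G" "g \<in> carrier G"
  shows "(a = c \<otimes> g) \<longleftrightarrow> (c = a \<otimes> inv g)"
  using assms by (metis inv_closed inv_inv m_assoc m_closed r_inv r_one)

lemma eval_word_trl:
  assumes fin: "finite (carrier G)" and A: "graded_subst G A"
  shows "a \<in> carrier G \<Longrightarrow> \<forall>l\<in>set w. gletter G l \<Longrightarrow> distinct (map fst w) \<Longrightarrow>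
    eval_word G A w a b = (if b = fst (trl G a w) then
      (\<Prod>j\<in>fst ` set w. coef G A j (fst (snd (trl G a w) j)) (snd (snd (trl G a w) j))) else 0)"
proof (induction w arbitrary: a)
  case Nil
  then show ?case by (auto simp: eval_word_def gmat_one_def)
next
  case (Cons l w)
  obtain i g s where l: "l = (i,g,s)" by (cases l) auto
  have g: "g \<in> carrier G" and i: "1 \<le> i" using Cons.prems(2) l by (auto simp: gletter_def)
  define q where "q = (if s then a \<otimes> inv g else a \<otimes> g)"
  have q: "q \<in> carrier G" using g Cons.prems(1) by (auto simp: q_def)
  have ew: "eval_word G A (l#w) a b = (\<Sum>c\<in>carrier G. eval_letter A l a c * eval_word G A w c b)"
    by (simp add: eval_word_def gmat_mult_def)
  have el: "eval_letter A l a c = (if c = q then coef G A i g (if s then q else a) else 0)"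
    if c: "c \<in> carrier G" for c
  proof (cases s)
    case True
    then show ?thesis using c g Cons.prems(1) step_iff[of a c g]
      by (auto simp: l eval_letter_def gmat_transpose_def graded_form[OF A i g] q_def)
  next
    case False
    then show ?thesis using c g Cons.prems(1)
      by (auto simp: l eval_letter_def graded_form[OF A i g] q_def)
  qed
  have "eval_word G A (l#w) a b = (\<Sum>c\<in>carrier G. (if c = q then coef G A i g (if s then q else a) * eval_word G A w q b else 0))"
    unfolding ew by (rule sum.cong) (auto simp: el)
  also have "\<dots> = coef G A i g (if s then q else a) * eval_word G A w q b"
    using sum_single[OF fin q] .
  finally have e1: "eval_word G A (l#w) a b = coef G A i g (if s then q else a) * eval_word G A w q b" .
  have IH: "eval_word G A w q b = (if b = fst (trl G q w) then
      (\<Prod>j\<in>fst ` set w. coef G A j (fst (snd (trl G q w) j)) (snd (snd (trl G q w) j))) else 0)"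
    using Cons q by auto
  have ni: "i \<notin> fst ` set w" using Cons.prems(3) l by auto
  have tr: "trl G a (l#w) = (fst (trl G q w), (snd (trl G q w))(i := (g, if s then q else a)))"
    by (simp add: l q_def Let_def)
  have pr: "(\<Prod>j\<in>fst ` set (l#w). coef G A j (fst (snd (trl G a (l#w)) j)) (snd (snd (trl G a (l#w)) j)))
     = coef G A i g (if s then q else a) * (\<Prod>j\<in>fst ` set w. coef G A j (fst (snd (trl G q w) j)) (snd (snd (trl G q w) j)))"
  proof -
    have "fst ` set (l#w) = insert i (fst ` set w)" by (simp add: l)
    moreover have "(\<Prod>j\<in>fst ` set w. coef G A j (fst (((snd (trl G q w))(i := (g, if s then q else a))) j)) (snd (((snd (trl G q w))(i := (g, if s then q else a))) j)))
      = (\<Prod>j\<in>fst ` set w. coef G A j (fst (snd (trl G q w) j)) (snd (snd (trl G q w) j)))"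
      using ni by (intro prod.cong) auto
    ultimately show ?thesis using ni unfolding tr by (simp add: prod.insert_if)
  qed
  have ft: "fst (trl G a (l#w)) = fst (trl G q w)" using tr by simp
  show ?case by (simp only: e1 IH pr ft) simp
qed

lemma trl_shift:
  assumes "a \<in> carrier G"
  shows "p \<in> carrier G \<Longrightarrow> \<forall>l\<in>set w. fst (snd l) \<in> carrier G \<Longrightarrow>
    trl G (a \<otimes> p) w = (a \<otimes> fst (trl G p w),
       (\<lambda>j. if j \<in> fst ` set w then (fst (snd (trl G p w) j), a \<otimes> snd (snd (trl G p w) j)) else undefined))"
proof (induction w arbitrary: p)
  case Nil then show ?case by simp
next
  case (Cons l w)
  obtain i g s where l: "l = (i,g,s)" by (cases l) auto
  have g: "g \<in> carrier G" using Cons.prems l by auto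
  define q where "q = (if s then p \<otimes> inv g else p \<otimes> g)"
  have q: "q \<in> carrier G" using g Cons.prems by (auto simp: q_def)
  have aq: "(if s then (a \<otimes> p) \<otimes> inv g else (a \<otimes> p) \<otimes> g) = a \<otimes> q"
    using g Cons.prems assms by (auto simp: q_def m_assoc)
  have t1: "trl G (a \<otimes> p) (l#w) = (fst (trl G (a \<otimes> q) w), (snd (trl G (a \<otimes> q) w))(i := (g, if s then a \<otimes> q else a \<otimes> p)))"
    using aq by (simp add: l Let_def)
  have t2: "trl G p (l#w) = (fst (trl G q w), (snd (trl G q w))(i := (g, if s then q else p)))"
    by (simp add: l q_def Let_def)
  have IH: "trl G (a \<otimes> q) w = (a \<otimes> fst (trl G q w),
       (\<lambda>j. if j \<in> fst ` set w then (fst (snd (trl G q w) j), a \<otimes> snd (snd (trl G q w) j)) else undefined))"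
    using Cons q by auto
  have "fst (trl G (a \<otimes> p) (l#w)) = a \<otimes> fst (trl G p (l#w))" unfolding t1 t2 IH by simp
  moreover have "snd (trl G (a \<otimes> p) (l#w)) j = (if j \<in> fst ` set (l#w) then (fst (snd (trl G p (l#w)) j), a \<otimes> snd (snd (trl G p (l#w)) j)) else undefined)" for j
    unfolding t1 t2 IH by (simp add: l)
  ultimately show ?case by (simp add: prod_eq_iff fun_eq_iff)
qed

lemma trl_vals:
  "p \<in> carrier G \<Longrightarrow> \<forall>l\<in>set w. fst (snd l) \<in> carrier G \<Longrightarrow> j \<in> fst ` set w \<Longrightarrow>
    snd (trl G p w) j \<in> carrier G \<times> carrier G"
proof (induction w arbitrary: p)
  case (Cons l w)
  obtain i g s where l: "l = (i,g,s)" by (cases l) auto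
  have g: "g \<in> carrier G" using Cons.prems l by auto
  have q: "(if s then p \<otimes> inv g else p \<otimes> g) \<in> carrier G" using g Cons.prems by auto
  show ?case using Cons.IH[OF q] Cons.prems g by (auto simp: l Let_def; force)
qed simp

end

definition Ev :: "('a, 'b) monoid_scheme \<Rightarrow> (nat \<Rightarrow> 'a \<Rightarrow> 'a mat) \<Rightarrow> nat \<Rightarrow> 'a \<times> (nat \<Rightarrow> 'a \<times> 'a) \<Rightarrow> 'a \<Rightarrow> 'a \<Rightarrow> complex" where
  "Ev G A n s a b = (if b = a \<otimes>\<^bsub>G\<^esub> fst s then (\<Prod>j\<in>{1..n}. coef G A j (fst (snd s j)) (a \<otimes>\<^bsub>G\<^esub> snd (snd s j))) else 0)"

lemma mlmon_idx: "w \<in> mlmon G n \<Longrightarrow> fst ` set w = {1..n}"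
  unfolding mlmon_def by simp

lemma (in group) eval_word_Ev:
  assumes fin: "finite (carrier G)" and A: "graded_subst G A" and w: "w \<in> mlmon G n" and a: "a \<in> carrier G"
  shows "eval_word G A w a b = Ev G A n (trl G \<one> w) a b"
proof -
  have idx: "fst ` set w = {1..n}" using mlmon_idx[OF w] .
  have gl: "\<forall>l\<in>set w. gletter G l" using w idx unfolding mlmon_def gletter_def by force
  have gc: "\<forall>l\<in>set w. fst (snd l) \<in> carrier G" using w unfolding mlmon_def by auto
  have d: "distinct (map fst w)" using w unfolding mlmon_def by auto
    have sh': "trl G a w = (a \<otimes> fst (trl G \<one> w),
       (\<lambda>j. if j \<in> fst ` set w then (fst (snd (trl G \<one> w) j), a \<otimes> snd (snd (trl G \<one> w) j)) else undefined))"
    using trl_shift[OF a one_closed gc] a by simp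
  show ?thesis
    unfolding eval_word_trl[OF fin A a gl d] Ev_def sh' idx
    by (simp only: fst_conv snd_conv, rule if_cong[OF refl], rule prod.cong, auto)
qed

interpretation Q: vector_space qscale
  by unfold_locales (simp_all add: qscale_def fun_eq_iff algebra_simps)

definition dl :: "'a word \<Rightarrow> 'a fpoly" where "dl w = (\<lambda>v. if v = w then 1 else 0)"

lemma qscale_sum_apply: "(\<Sum>x\<in>A. qscale (u x) (f x)) v = (\<Sum>x\<in>A. u x * f x v)"
  by (simp add: sum_fun_apply qscale_def)

lemma mlmon_finite:
  assumes "finite (carrier G)" shows "finite (mlmon G n)"
proof -
  have "mlmon G n \<subseteq> {w. set w \<subseteq> {1..n} \<times> carrier G \<times> UNIV \<and> length w = n}"
  proof
    fix w assume w: "w \<in> mlmon G n"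
    have d: "distinct (map fst w)" and st: "set (map fst w) = {1..n}" using w unfolding mlmon_def by auto
    have "length w = length (map fst w)" by simp
    also have "\<dots> = card (set (map fst w))" using distinct_card[OF d] by simp
    finally have "length w = n" using st by simp
    then show "w \<in> {w. set w \<subseteq> {1..n} \<times> carrier G \<times> UNIV \<and> length w = n}"
      using w unfolding mlmon_def by force
  qed
  moreover have "finite {w. set w \<subseteq> {1..n} \<times> carrier G \<times> (UNIV::bool set) \<and> length w = n}"
    using assms by (intro finite_lists_length_eq) auto
  ultimately show ?thesis by (rule finite_subset)
qed

lemma dl_free: "w \<in> mlmon G n \<Longrightarrow> dl w \<in> Pn G n"
  unfolding Pn_def free_alg_def dl_def mlmon_def gletter_def by force

lemma mlmon_gletter: "v \<in> mlmon G n \<Longrightarrow> l \<in> set v \<Longrightarrow> gletter G l"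
proof -
  assume v: "v \<in> mlmon G n" and l: "l \<in> set v"
  have "fst l \<in> set (map fst v)" using l by simp
  then show "gletter G l" using v l unfolding mlmon_def gletter_def by auto
qed

lemma Pn_span: 
  assumes fin: "finite (carrier G)" and f: "f \<in> Pn G n"
  shows "f = (\<Sum>w\<in>mlmon G n. qscale (f w) (dl w))"
proof
  fix v
  have "(\<Sum>w\<in>mlmon G n. qscale (f w) (dl w)) v = (\<Sum>w\<in>mlmon G n. f w * (if v = w then 1 else 0))"
    by (simp add: qscale_sum_apply dl_def)
  also have "\<dots> = (\<Sum>w\<in>mlmon G n. (if v = w then f w else 0))"
    by (intro sum.cong) auto
  also have "\<dots> = (if v \<in> mlmon G n then f v else 0)"
    by (simp add: sum.delta mlmon_finite[OF fin])
  also have "\<dots> = f v" using f unfolding Pn_def by auto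
  finally show "f v = (\<Sum>w\<in>mlmon G n. qscale (f w) (dl w)) v" by simp
qed

lemma dl_inj: "inj dl"
  by (rule injI) (metis dl_def one_neq_zero)

lemma dim_Pn:
  assumes fin: "finite (carrier G)"
  shows "qdim (Pn G n) = card (mlmon G n)"
proof -
  let ?M = "mlmon G n"
  have finM: "finite ?M" by (rule mlmon_finite[OF fin])
  have "Q.dim (Pn G n) = card (dl ` ?M)"
  proof (rule Q.dim_unique)
    show "dl ` ?M \<subseteq> Pn G n" using dl_free by blast
    show "Pn G n \<subseteq> Q.span (dl ` ?M)"
    proof
      fix f assume f: "f \<in> Pn G n"
      have "(\<Sum>w\<in>?M. qscale (f w) (dl w)) \<in> Q.span (dl ` ?M)"
        by (intro Q.span_sum Q.span_scale Q.span_base) auto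
      then show "f \<in> Q.span (dl ` ?M)" using Pn_span[OF fin f] by simp
    qed
    show "Q.independent (dl ` ?M)"
    proof (rule Q.independent_if_scalars_zero)
      show "finite (dl ` ?M)" using finM by simp
      fix u x assume s: "(\<Sum>x\<in>dl ` ?M. qscale (u x) x) = 0" and x: "x \<in> dl ` ?M"
      then obtain w0 where w0: "w0 \<in> ?M" "x = dl w0" by auto
      have "0 = (\<Sum>x\<in>dl ` ?M. qscale (u x) x) w0" using s by simp
      also have "\<dots> = (\<Sum>w\<in>?M. u (dl w) * dl w w0)"
        by (simp add: qscale_sum_apply sum.reindex inj_on_subset[OF dl_inj])
      also have "\<dots> = (\<Sum>w\<in>?M. (if w0 = w then u (dl w) else 0))"
        by (intro sum.cong) (auto simp: dl_def)
      also have "\<dots> = u x" using w0 finM by simp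
      finally show "u x = 0" by simp
    qed
  qed simp
  also have "\<dots> = card ?M" by (simp add: card_image inj_on_subset[OF dl_inj])
  finally show ?thesis by (simp add: qdim_def)
qed

definition sig :: "('a, 'b) monoid_scheme \<Rightarrow> 'a word \<Rightarrow> 'a \<times> (nat \<Rightarrow> 'a \<times> 'a)" where
  "sig G w = trl G \<one>\<^bsub>G\<^esub> w"
definition Sg :: "('a, 'b) monoid_scheme \<Rightarrow> nat \<Rightarrow> ('a \<times> (nat \<Rightarrow> 'a \<times> 'a)) set" where
  "Sg G n = sig G ` mlmon G n"
definition Phi :: "('a, 'b) monoid_scheme \<Rightarrow> nat \<Rightarrow> 'a fpoly \<Rightarrow> 'a \<times> (nat \<Rightarrow> 'a \<times> 'a) \<Rightarrow> rat" where
  "Phi G n f s = (\<Sum>w\<in>{w\<in>mlmon G n. sig G w = s}. f w)"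

lemma (in group) eval_poly_M:
  assumes fin: "finite (carrier G)" and f: "f \<in> Pn G n" and A: "graded_subst G A" and a: "a \<in> carrier G"
  shows "eval_poly G A f a b = (\<Sum>w\<in>mlmon G n. of_rat (f w) * Ev G A n (sig G w) a b)"
proof -
  have finM: "finite (mlmon G n)" by (rule mlmon_finite[OF fin])
  have sub: "{w. f w \<noteq> 0} \<subseteq> mlmon G n" using f unfolding Pn_def by auto
  have "eval_poly G A f a b = (\<Sum>w\<in>{w. f w \<noteq> 0}. of_rat (f w) * eval_word G A w a b)"
    by (simp add: eval_poly_def)
  also have "\<dots> = (\<Sum>w\<in>mlmon G n. of_rat (f w) * eval_word G A w a b)"
    by (rule sum.mono_neutral_left[OF finM sub]) auto
  also have "\<dots> = (\<Sum>w\<in>mlmon G n. of_rat (f w) * Ev G A n (sig G w) a b)"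
    by (intro sum.cong refl) (simp add: eval_word_Ev[OF fin A _ a] sig_def)
  finally show ?thesis .
qed

lemma (in group) gid_iff:
  assumes fin: "finite (carrier G)" and f: "f \<in> Pn G n"
  shows "f \<in> gid G \<longleftrightarrow> (\<forall>s\<in>Sg G n. Phi G n f s = 0)"
proof
  have finM: "finite (mlmon G n)" by (rule mlmon_finite[OF fin])
  assume H: "\<forall>s\<in>Sg G n. Phi G n f s = 0"
  have "eval_poly G A f a b = 0" if A: "graded_subst G A" and a: "a \<in> carrier G" for A a b
  proof -
    have "eval_poly G A f a b = (\<Sum>w\<in>mlmon G n. of_rat (f w) * Ev G A n (sig G w) a b)"
      by (rule eval_poly_M[OF fin f A a])
    also have "\<dots> = (\<Sum>s\<in>Sg G n. \<Sum>w\<in>{w\<in>mlmon G n. sig G w = s}. of_rat (f w) * Ev G A n (sig G w) a b)"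
      by (rule sum.group[symmetric]) (auto simp: finM Sg_def)
    also have "\<dots> = (\<Sum>s\<in>Sg G n. of_rat (Phi G n f s) * Ev G A n s a b)"
      unfolding Phi_def of_rat_sum sum_distrib_right by (intro sum.cong refl) auto
    also have "\<dots> = 0" using H by simp
    finally show ?thesis .
  qed
  then show "f \<in> gid G" using f unfolding gid_def Pn_def by auto
next
  have finM: "finite (mlmon G n)" by (rule mlmon_finite[OF fin])
  assume fg: "f \<in> gid G"
  show "\<forall>s\<in>Sg G n. Phi G n f s = 0"
  proof
    fix s assume s: "s \<in> Sg G n"
    obtain t m where tm: "s = (t, m)" by (cases s)
    obtain w0 where w0: "w0 \<in> mlmon G n" "s = sig G w0" using s unfolding Sg_def by auto
    have gc0: "\<forall>l\<in>set w0. fst (snd l) \<in> carrier G" using w0 unfolding mlmon_def by auto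
    have t: "t \<in> carrier G" using trl_carrier[OF one_closed gc0] w0 tm by (metis fst_conv sig_def)
    define A0 where "A0 = (\<lambda>(i::nat) g x y. if x \<in> carrier G \<and> y \<in> carrier G \<and> y = x \<otimes> g
        then (if m i = (g, x) then 1 else 0) else (0::complex))"
    have A0: "graded_subst G A0"
      unfolding graded_subst_def graded_comp_def A0_def
    proof (intro allI impI CollectI)
      fix i g
      show "\<exists>d. (\<lambda>x y. if x \<in> carrier G \<and> y \<in> carrier G \<and> y = x \<otimes> g then if m i = (g, x) then 1 else 0 else 0)
          = (\<lambda>a b. if a \<in> carrier G \<and> b \<in> carrier G \<and> b = a \<otimes> g then d a else (0::complex))"
        by (rule exI[of _ "\<lambda>x. if m i = (g, x) then 1 else 0"]) simp
    qed
    have cf: "coef G A0 j g x = (if m j = (g, x) then 1 else 0)" if "x \<in> carrier G" "g \<in> carrier G" for j g x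
      using that by (simp add: coef_def A0_def)
    have Evw: "Ev G A0 n (sig G w) \<one> t = (if sig G w = s then 1 else 0)" if w: "w \<in> mlmon G n" for w
    proof -
      obtain t' m' where tm': "sig G w = (t', m')" by (cases "sig G w")
      have gc: "\<forall>l\<in>set w. fst (snd l) \<in> carrier G" using w unfolding mlmon_def by auto
      have idx: "fst ` set w = {1..n}" using mlmon_idx[OF w] .
      have mv: "m' j \<in> carrier G \<times> carrier G" if "j \<in> {1..n}" for j
        using trl_vals[OF one_closed gc, of j] that idx tm' by (simp add: sig_def)
      have mu: "m' j = undefined" if "j \<notin> {1..n}" for j
        using trl_undef[of j w G \<one>] that idx tm' by (simp add: sig_def)
      have idx0: "fst ` set w0 = {1..n}" using mlmon_idx[OF w0(1)] .
      have mu0: "m j = undefined" if "j \<notin> {1..n}" for j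
        using trl_undef[of j w0 G \<one>] that idx0 tm w0 by (simp add: sig_def)
      have t': "t' \<in> carrier G" using trl_carrier[OF one_closed gc] tm' by (metis fst_conv sig_def)
      have pr: "(\<Prod>j\<in>{1..n}. coef G A0 j (fst (m' j)) (\<one> \<otimes> snd (m' j)))
           = (\<Prod>j\<in>{1..n}. (if m j = m' j then 1 else 0))"
      proof (intro prod.cong refl)
        fix j assume j: "j \<in> {1..n}"
        obtain g' x' where gx: "m' j = (g', x')" "g' \<in> carrier G" "x' \<in> carrier G" using mv[OF j] by auto
        show "coef G A0 j (fst (m' j)) (\<one> \<otimes> snd (m' j)) = (if m j = m' j then 1 else 0)"
          using gx by (simp add: cf)
      qed
      also have "\<dots> = (if (\<forall>j\<in>{1..n}. m j = m' j) then 1 else 0)"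
        by (auto simp: prod.neutral)
      also have "(\<forall>j\<in>{1..n}. m j = m' j) \<longleftrightarrow> m = m'"
        using mu mu0 by (auto simp: fun_eq_iff)
      finally show ?thesis unfolding Ev_def tm' tm using t t' by auto
    qed
    have "eval_poly G A0 f \<one> t = (\<Sum>w\<in>mlmon G n. of_rat (f w) * Ev G A0 n (sig G w) \<one> t)"
      by (rule eval_poly_M[OF fin f A0 one_closed])
    also have "\<dots> = (\<Sum>w\<in>mlmon G n. if sig G w = s then of_rat (f w) else 0)"
      by (intro sum.cong refl) (simp add: Evw)
    also have "\<dots> = of_rat (Phi G n f s)"
      by (simp add: sum.inter_filter[OF finM, symmetric] Phi_def of_rat_sum)
    finally have "of_rat (Phi G n f s) = (eval_poly G A0 f \<one> t)" by simp
    also have "\<dots> = 0" using fg A0 t unfolding gid_def by auto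
    finally show "Phi G n f s = 0" by simp
  qed
qed

lemma (in group) dim_K:
  assumes fin: "finite (carrier G)"
  shows "qdim (Pn G n \<inter> gid G) = card (mlmon G n) - card (Sg G n)"
proof -
  let ?M = "mlmon G n" and ?S = "Sg G n"
  have finM: "finite ?M" by (rule mlmon_finite[OF fin])
  define rep where "rep s = (SOME w. w \<in> ?M \<and> sig G w = s)" for s
  have rep: "rep s \<in> ?M \<and> sig G (rep s) = s" if "s \<in> ?S" for s
    unfolding rep_def by (rule someI_ex) (use that in \<open>auto simp: Sg_def\<close>)
  have repinj: "inj_on rep ?S" by (metis inj_onI rep)
  define N where "N = ?M - rep ` ?S"
  define bb where "bb w = dl w - dl (rep (sig G w))" for w
  have sigS: "sig G w \<in> ?S" if "w \<in> ?M" for w using that by (simp add: Sg_def)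
  have bbN: "bb w v = (if v = w then 1 else 0)" if "w \<in> N" "v \<in> N" for w v
  proof -
    have "rep (sig G w) \<in> rep ` ?S" using sigS that(1) N_def by auto
    then show ?thesis using that unfolding bb_def N_def dl_def by auto
  qed
  have injbb: "inj_on bb N"
    by (rule inj_onI) (metis bbN one_neq_zero)
  have finN: "finite N" using finM by (simp add: N_def)
  have K: "Pn G n \<inter> gid G = {f \<in> Pn G n. \<forall>s\<in>?S. Phi G n f s = 0}"
    using gid_iff[OF fin] by auto
  have "Q.dim (Pn G n \<inter> gid G) = card (bb ` N)"
  proof (rule Q.dim_unique)
    show "bb ` N \<subseteq> Pn G n \<inter> gid G"
    proof
      fix x assume "x \<in> bb ` N"
      then obtain w where w: "w \<in> N" "x = bb w" by auto
      have wM: "w \<in> ?M" using w by (simp add: N_def)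
      have r: "rep (sig G w) \<in> ?M" "sig G (rep (sig G w)) = sig G w" using rep[OF sigS[OF wM]] by auto
      have xP: "x \<in> Pn G n"
      proof -
        have sub: "{v. x v \<noteq> 0} \<subseteq> {w, rep (sig G w)}" using w by (auto simp: bb_def dl_def)
        then have "finite {v. x v \<noteq> 0}" by (rule finite_subset) simp
        moreover have "v \<in> ?M" if "x v \<noteq> 0" for v using sub that wM r by auto
        ultimately show ?thesis unfolding Pn_def free_alg_def using mlmon_gletter by blast
      qed
      have "Phi G n x s = 0" for s
      proof -
        have "Phi G n x s = (\<Sum>v\<in>{v\<in>?M. sig G v = s}. dl w v) - (\<Sum>v\<in>{v\<in>?M. sig G v = s}. dl (rep (sig G w)) v)"
          unfolding Phi_def w bb_def by (simp add: sum_subtractf)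
        also have "\<dots> = 0" using finM wM r by (simp add: dl_def sum.delta)
        finally show ?thesis .
      qed
      then show "x \<in> Pn G n \<inter> gid G" using xP K by auto
    qed
    show "Pn G n \<inter> gid G \<subseteq> Q.span (bb ` N)"
    proof
      fix f assume fK: "f \<in> Pn G n \<inter> gid G"
      have fP: "f \<in> Pn G n" and ph: "\<forall>s\<in>?S. Phi G n f s = 0" using fK K by auto
      have feq: "f = (\<Sum>w\<in>N. qscale (f w) (bb w))"
      proof
        fix v
        have "(\<Sum>w\<in>N. qscale (f w) (bb w)) v = (\<Sum>w\<in>N. f w * dl w v) - (\<Sum>w\<in>N. f w * dl (rep (sig G w)) v)"
          by (simp add: qscale_sum_apply bb_def algebra_simps sum_subtractf)
        also have "(\<Sum>w\<in>N. f w * dl w v) = (if v \<in> N then f v else 0)"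
        proof -
          have "(\<Sum>w\<in>N. f w * dl w v) = (\<Sum>w\<in>N. if v = w then f w else 0)"
            by (intro sum.cong) (auto simp: dl_def)
          then show ?thesis using finN by simp
        qed
        also have "(\<Sum>w\<in>N. f w * dl (rep (sig G w)) v) = (\<Sum>w\<in>{w\<in>N. rep (sig G w) = v}. f w)"
        proof -
          have "(\<Sum>w\<in>N. f w * dl (rep (sig G w)) v) = (\<Sum>w\<in>N. if rep (sig G w) = v then f w else 0)"
            by (intro sum.cong) (auto simp: dl_def)
          then show ?thesis using finN by (simp add: sum.inter_filter)
        qed
        finally have eq: "(\<Sum>w\<in>N. qscale (f w) (bb w)) v = (if v \<in> N then f v else 0) - (\<Sum>w\<in>{w\<in>N. rep (sig G w) = v}. f w)" .
        show "f v = (\<Sum>w\<in>N. qscale (f w) (bb w)) v"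
        proof (cases "v \<in> rep ` ?S")
          case True
          then obtain s where s: "s \<in> ?S" "v = rep s" by auto
          have vM: "v \<in> ?M" "sig G v = s" using rep[OF s(1)] s by auto
          have vN: "v \<notin> N" using s by (simp add: N_def)
          have set1: "{w\<in>N. rep (sig G w) = v} = {w\<in>N. sig G w = s}"
            using s(1) sigS repinj unfolding N_def s(2) by (auto simp: inj_on_eq_iff)
          have set2: "{w\<in>?M. sig G w = s} = insert v {w\<in>N. sig G w = s}"
          proof (intro equalityI subsetI)
            fix w assume "w \<in> {w\<in>?M. sig G w = s}"
            then have wM: "w \<in> ?M" "sig G w = s" by auto
            show "w \<in> insert v {w\<in>N. sig G w = s}"
            proof (cases "w \<in> rep ` ?S")
              case True
              then obtain s' where s': "s' \<in> ?S" "w = rep s'" by auto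
              then have "s' = s" using rep[OF s'(1)] wM by simp
              then show ?thesis using s s' by simp
            next
              case False then show ?thesis using wM by (simp add: N_def)
            qed
          next
            fix w assume "w \<in> insert v {w\<in>N. sig G w = s}"
            then show "w \<in> {w\<in>?M. sig G w = s}" using vM by (auto simp: N_def)
          qed
          have "0 = Phi G n f s" using ph s by simp
          also have "\<dots> = f v + (\<Sum>w\<in>{w\<in>N. sig G w = s}. f w)"
            unfolding Phi_def set2 using finN vN by (simp add: sum.insert)
          finally show ?thesis unfolding eq set1 using vN by simp
        next
          case False
          have emp: "{w\<in>N. rep (sig G w) = v} = {}"
          proof -
            have "rep (sig G w) \<noteq> v" if "w \<in> N" for w
              using that False sigS by (auto simp: N_def)
            then show ?thesis by auto
          qed
          moreover have "v \<notin> N \<Longrightarrow> f v = 0" using False fP unfolding Pn_def N_def by auto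
          ultimately show ?thesis unfolding eq emp by auto
        qed
      qed
      have "(\<Sum>w\<in>N. qscale (f w) (bb w)) \<in> Q.span (bb ` N)"
        by (intro Q.span_sum Q.span_scale Q.span_base) auto
      then show "f \<in> Q.span (bb ` N)" using feq by simp
    qed
    show "Q.independent (bb ` N)"
    proof (rule Q.independent_if_scalars_zero)
      show "finite (bb ` N)" using finN by simp
      fix u x assume s: "(\<Sum>x\<in>bb ` N. qscale (u x) x) = 0" and x: "x \<in> bb ` N"
      then obtain w0 where w0: "w0 \<in> N" "x = bb w0" by auto
      have "0 = (\<Sum>x\<in>bb ` N. qscale (u x) x) w0" using s by simp
      also have "\<dots> = (\<Sum>w\<in>N. u (bb w) * bb w w0)"
        by (simp add: qscale_sum_apply sum.reindex injbb)
      also have "\<dots> = (\<Sum>w\<in>N. (if w0 = w then u (bb w) else 0))"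
        by (intro sum.cong) (auto simp: bbN w0)
      also have "\<dots> = u x" using w0 finN by simp
      finally show "u x = 0" by simp
    qed
  qed simp
  also have "\<dots> = card N" by (simp add: card_image injbb)
  also have "\<dots> = card ?M - card (rep ` ?S)"
    unfolding N_def by (rule card_Diff_subset) (use rep finM in \<open>auto simp: Sg_def\<close>)
  also have "card (rep ` ?S) = card ?S" by (simp add: card_image repinj)
  finally show ?thesis by (simp add: qdim_def)
qed

lemma (in group) gcodim_eq:
  assumes fin: "finite (carrier G)"
  shows "gcodim G n = card (Sg G n)"
proof -
  have "card (Sg G n) \<le> card (mlmon G n)"
    unfolding Sg_def by (rule card_image_le[OF mlmon_finite[OF fin]])
  then show ?thesis unfolding gcodim_def dim_Pn[OF fin] dim_K[OF fin] by simp
qed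

definition toggle :: "'v \<Rightarrow> 'v set \<Rightarrow> 'v set" where
  "toggle x A = (if x \<in> A then A - {x} else insert x A)"

lemma mem_toggle: "y \<in> toggle x A \<longleftrightarrow> (y \<in> A) \<noteq> (y = x)"
  by (auto simp: toggle_def)

lemma toggle_toggle[simp]: "toggle x (toggle x A) = A"
  by (auto simp: toggle_def)

lemma toggle_comm: "toggle x (toggle y A) = toggle y (toggle x A)"
  by (auto simp: toggle_def)

lemma finite_toggle[simp]: "finite (toggle x A) = finite A"
  by (auto simp: toggle_def)

lemma even_card_toggle2: "finite A \<Longrightarrow> even (card (toggle x (toggle y A))) = even (card A)"
  by (auto simp: toggle_def card_insert_if)

definition deg :: "(nat \<Rightarrow> 'v \<times> 'v) \<Rightarrow> nat set \<Rightarrow> 'v \<Rightarrow> nat" where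
  "deg ep I x = card {i\<in>I. fst (ep i) = x} + card {i\<in>I. snd (ep i) = x}"

definition oddset :: "(nat \<Rightarrow> 'v \<times> 'v) \<Rightarrow> nat set \<Rightarrow> 'v set" where
  "oddset ep I = {x. odd (deg ep I x)}"

lemma deg_insert:
  assumes "finite I" "i \<notin> I"
  shows "deg ep (insert i I) x = deg ep I x + (if fst (ep i) = x then 1 else 0) + (if snd (ep i) = x then 1 else 0)"
proof -
  have a: "{j\<in>insert i I. fst (ep j) = x} = (if fst (ep i) = x then insert i {j\<in>I. fst (ep j) = x} else {j\<in>I. fst (ep j) = x})" by auto
  have b: "{j\<in>insert i I. snd (ep j) = x} = (if snd (ep i) = x then insert i {j\<in>I. snd (ep j) = x} else {j\<in>I. snd (ep j) = x})" by auto
  show ?thesis unfolding deg_def a b using assms by auto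
qed

lemma oddset_empty[simp]: "oddset ep {} = {}"
  by (simp add: oddset_def deg_def)

lemma oddset_insert:
  assumes "finite I" "i \<notin> I"
  shows "oddset ep (insert i I) = toggle (fst (ep i)) (toggle (snd (ep i)) (oddset ep I))"
  unfolding oddset_def by (auto simp: mem_toggle deg_insert[OF assms])

lemma oddset_sub: "finite I \<Longrightarrow> oddset ep I \<subseteq> fst ` ep ` I \<union> snd ` ep ` I"
proof
  fix x assume "x \<in> oddset ep I"
  then have "deg ep I x \<noteq> 0" unfolding oddset_def by (metis dvd_0_right mem_Collect_eq)
  then have "{i\<in>I. fst (ep i) = x} \<noteq> {} \<or> {i\<in>I. snd (ep i) = x} \<noteq> {}" unfolding deg_def by (metis add.right_neutral add_0 card.empty)
  then show "x \<in> fst ` ep ` I \<union> snd ` ep ` I" by blast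
qed

lemma finite_oddset: "finite I \<Longrightarrow> finite (oddset ep I)"
  by (rule finite_subset[OF oddset_sub]) auto

lemma even_card_oddset: "finite I \<Longrightarrow> even (card (oddset ep I))"
proof (induction I rule: finite_induct)
  case (insert i I)
  then show ?case by (simp add: oddset_insert even_card_toggle2 finite_oddset)
qed simp

lemma deg_union: "finite C \<Longrightarrow> finite D \<Longrightarrow> C \<inter> D = {} \<Longrightarrow> deg ep (C \<union> D) x = deg ep C x + deg ep D x"
proof -
  assume f: "finite C" "finite D" and dj: "C \<inter> D = {}"
  have a: "{i\<in>C \<union> D. fst (ep i) = x} = {i\<in>C. fst (ep i) = x} \<union> {i\<in>D. fst (ep i) = x}" by auto
  have b: "{i\<in>C \<union> D. snd (ep i) = x} = {i\<in>C. snd (ep i) = x} \<union> {i\<in>D. snd (ep i) = x}" by auto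
  show ?thesis unfolding deg_def a b
    by (subst card_Un_disjoint, use f dj in auto)+
qed

lemma deg_zero: "(\<And>i. i \<in> D \<Longrightarrow> fst (ep i) \<noteq> x \<and> snd (ep i) \<noteq> x) \<Longrightarrow> deg ep D x = 0"
proof -
  assume h: "\<And>i. i \<in> D \<Longrightarrow> fst (ep i) \<noteq> x \<and> snd (ep i) \<noteq> x"
  have e: "{i \<in> D. fst (ep i) = x} = {}" "{i \<in> D. snd (ep i) = x} = {}" using h by auto
  show ?thesis unfolding deg_def e by simp
qed

lemma oddset_cong: "(\<And>i. i \<in> I \<Longrightarrow> ep i = ep' i) \<Longrightarrow> oddset ep I = oddset ep' I"
proof -
  assume h: "\<And>i. i \<in> I \<Longrightarrow> ep i = ep' i"
  have "deg ep I x = deg ep' I x" for x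
  proof -
    have "{i\<in>I. fst (ep i) = x} = {i\<in>I. fst (ep' i) = x}" "{i\<in>I. snd (ep i) = x} = {i\<in>I. snd (ep' i) = x}"
      using h by auto
    then show ?thesis unfolding deg_def by simp
  qed
  then show ?thesis unfolding oddset_def by simp
qed

fun wend :: "(nat \<Rightarrow> 'v \<times> 'v) \<Rightarrow> 'v \<Rightarrow> (nat \<times> bool) list \<Rightarrow> 'v option" where
  "wend ep p [] = Some p"
| "wend ep p ((i,d)#r) = (if (if d then snd (ep i) else fst (ep i)) = p
      then wend ep (if d then fst (ep i) else snd (ep i)) r else None)"

lemma wend_append: "wend ep p (a @ b) = (case wend ep p a of None \<Rightarrow> None | Some q \<Rightarrow> wend ep q b)"
  by (induction ep p a rule: wend.induct) auto

definition cut :: "(nat \<Rightarrow> 'v \<times> 'v) \<Rightarrow> nat set \<Rightarrow> 'v \<Rightarrow> bool" where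
  "cut ep I s \<longleftrightarrow> (\<forall>S. s \<in> S \<longrightarrow> (\<exists>i\<in>I. fst (ep i) \<notin> S \<or> snd (ep i) \<notin> S)
       \<longrightarrow> (\<exists>i\<in>I. (fst (ep i) \<in> S) \<noteq> (snd (ep i) \<in> S)))"

inductive_set reach :: "(nat \<Rightarrow> 'v \<times> 'v) \<Rightarrow> nat set \<Rightarrow> 'v \<Rightarrow> 'v set" for ep I u where
  r0: "u \<in> reach ep I u"
| r1: "x \<in> reach ep I u \<Longrightarrow> j \<in> I \<Longrightarrow> fst (ep j) = x \<Longrightarrow> snd (ep j) \<in> reach ep I u"
| r2: "x \<in> reach ep I u \<Longrightarrow> j \<in> I \<Longrightarrow> snd (ep j) = x \<Longrightarrow> fst (ep j) \<in> reach ep I u"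

lemma reach_closed:
  "j \<in> I \<Longrightarrow> (fst (ep j) \<in> reach ep I u) = (snd (ep j) \<in> reach ep I u)"
  by (meson reach.r1 reach.r2)

lemma reach_sub:
  assumes "x \<in> reach ep I u" "u \<in> S"
    "\<And>j. j \<in> I \<Longrightarrow> fst (ep j) \<in> reach ep I u \<Longrightarrow> (fst (ep j) \<in> S) = (snd (ep j) \<in> S)"
  shows "x \<in> S"
  using assms(1)
proof (induction rule: reach.induct)
  case r0 then show ?case using assms(2) .
next
  case (r1 x j) then show ?case using assms(3) by auto
next
  case (r2 x j) then show ?case using assms(3) reach_closed[of j I ep u] by auto
qed

lemma toggle_single: "toggle s {t} = {} \<longleftrightarrow> s = t"
  by (auto simp: toggle_def)

theorem euler:
  "finite I \<Longrightarrow> oddset ep I = toggle s {t} \<Longrightarrow> cut ep I s \<Longrightarrow>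
    \<exists>ws. distinct (map fst ws) \<and> set (map fst ws) = I \<and> wend ep s ws = Some t"
proof (induction "card I" arbitrary: I s t rule: less_induct)
  case less
  note IH = less.hyps
  show ?case
  proof (cases "I = {}")
    case True
    then have "s = t" using less.prems(2) toggle_single by fastforce
    then show ?thesis using True by (intro exI[of _ "[]"]) simp
  next
    case Ine: False
    show ?thesis
    proof (cases "\<exists>i\<in>I. ep i = (s, s)")
      case True
      then obtain i where i: "i \<in> I" "ep i = (s, s)" by auto
      define I' where "I' = I - {i}"
      have II: "I = insert i I'" "i \<notin> I'" "finite I'" using i less.prems(1) by (auto simp: I'_def)
      have odd': "oddset ep I' = toggle s {t}"
        using less.prems(2) oddset_insert[OF II(3,2), of ep] i(2) II(1) by simp
      have cut': "cut ep I' s"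
        unfolding cut_def
      proof (intro allI impI)
        fix S assume sS: "s \<in> S" and ex: "\<exists>j\<in>I'. fst (ep j) \<notin> S \<or> snd (ep j) \<notin> S"
        then have "\<exists>j\<in>I. fst (ep j) \<notin> S \<or> snd (ep j) \<notin> S" using II by auto
        then obtain j where j: "j \<in> I" "(fst (ep j) \<in> S) \<noteq> (snd (ep j) \<in> S)"
          using less.prems(3) sS unfolding cut_def by blast
        then have "j \<noteq> i" using i sS by auto
        then show "\<exists>j\<in>I'. (fst (ep j) \<in> S) \<noteq> (snd (ep j) \<in> S)" using j II by auto
      qed
      have "card I' < card I" using II by simp
      from IH[OF this II(3) odd' cut'] obtain ws where
        ws: "distinct (map fst ws)" "set (map fst ws) = I'" "wend ep s ws = Some t" by blast
      show ?thesis
        by (rule exI[of _ "(i,False)#ws"]) (use ws II i in auto)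
    next
      case noloop: False
      obtain j0 where "j0 \<in> I" using Ine by auto
      then have "\<exists>j\<in>I. fst (ep j) \<notin> {s} \<or> snd (ep j) \<notin> {s}"
        using noloop by (metis prod.collapse singletonI singleton_iff)
      then obtain i where i: "i \<in> I" "(fst (ep i) \<in> {s}) \<noteq> (snd (ep i) \<in> {s})"
        using less.prems(3) unfolding cut_def by (metis singletonI)
      define d where "d = (snd (ep i) = s)"
      define u where "u = (if d then fst (ep i) else snd (ep i))"
      have sd: "(if d then snd (ep i) else fst (ep i)) = s" using i by (auto simp: d_def)
      have us: "u \<noteq> s" using i by (auto simp: d_def u_def)
      have epi: "{fst (ep i), snd (ep i)} = {s, u}" using i by (auto simp: d_def u_def)
      define I' where "I' = I - {i}"
      have II: "I = insert i I'" "i \<notin> I'" "finite I'" using i less.prems(1) by (auto simp: I'_def)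
      have togg: "toggle (fst (ep i)) (toggle (snd (ep i)) X) = toggle s (toggle u X)" for X
        using i by (auto simp: d_def u_def toggle_comm)
      have oddI': "oddset ep I' = toggle u {t}"
      proof -
        have "toggle s {t} = toggle s (toggle u (oddset ep I'))"
          using less.prems(2) oddset_insert[OF II(3,2), of ep] II(1) togg by simp
        then have "toggle s (toggle s {t}) = toggle s (toggle s (toggle u (oddset ep I')))" by simp
        then have "{t} = toggle u (oddset ep I')" by simp
        then show ?thesis by (metis toggle_toggle)
      qed
      define S0 where "S0 = reach ep I' u"
      define C where "C = {j\<in>I'. fst (ep j) \<in> S0}"
      define D where "D = I' - C"
      have uS0: "u \<in> S0" by (simp add: S0_def reach.r0)
      have Cboth: "fst (ep j) \<in> S0 \<and> snd (ep j) \<in> S0" if "j \<in> C" for j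
        using that reach_closed[of j I' ep u] by (auto simp: C_def S0_def)
      have Dboth: "fst (ep j) \<notin> S0 \<and> snd (ep j) \<notin> S0" if "j \<in> D" for j
        using that reach_closed[of j I' ep u] by (auto simp: C_def D_def S0_def)
      have CD: "I' = C \<union> D" "C \<inter> D = {}" "finite C" "finite D" "C \<subseteq> I'" "D \<subseteq> I'"
        using II(3) by (auto simp: C_def D_def)
      have degI': "deg ep I' x = deg ep C x + deg ep D x" for x
        using deg_union[OF CD(3,4,2)] CD(1) by simp
      have oddC: "oddset ep C = oddset ep I' \<inter> S0"
      proof -
        have a: "deg ep D x = 0" if "x \<in> S0" for x using Dboth that by (intro deg_zero) auto
        have b: "deg ep C x = 0" if "x \<notin> S0" for x using Cboth that by (intro deg_zero) auto
        show ?thesis unfolding oddset_def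
        proof (rule Set.set_eqI)
          fix x show "x \<in> {x. odd (deg ep C x)} \<longleftrightarrow> x \<in> {x. odd (deg ep I' x)} \<inter> S0"
            using a[of x] b[of x] degI'[of x] by (cases "x \<in> S0") auto
        qed
      qed
      have oddD: "oddset ep D = oddset ep I' - S0"
      proof -
        have a: "deg ep D x = 0" if "x \<in> S0" for x using Dboth that by (intro deg_zero) auto
        have b: "deg ep C x = 0" if "x \<notin> S0" for x using Cboth that by (intro deg_zero) auto
        show ?thesis unfolding oddset_def
        proof (rule Set.set_eqI)
          fix x show "x \<in> {x. odd (deg ep D x)} \<longleftrightarrow> x \<in> {x. odd (deg ep I' x)} - S0"
            using a[of x] b[of x] degI'[of x] by (cases "x \<in> S0") auto
        qed
      qed
      have tS0: "t \<in> S0"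
      proof (rule ccontr)
        assume "t \<notin> S0"
        then have "oddset ep C = {u}" using oddC oddI' uS0 by (auto simp: toggle_def)
        then show False using even_card_oddset[OF CD(3), of ep] by simp
      qed
      have oddC': "oddset ep C = toggle u {t}" using oddC oddI' uS0 tS0 by (auto simp: toggle_def)
      have oddD': "oddset ep D = toggle s {s}" using oddD oddI' uS0 tS0 by (auto simp: toggle_def)
      have cutC: "cut ep C u"
        unfolding cut_def
      proof (intro allI impI)
        fix S assume uS: "u \<in> S" and ex: "\<exists>j\<in>C. fst (ep j) \<notin> S \<or> snd (ep j) \<notin> S"
        show "\<exists>j\<in>C. (fst (ep j) \<in> S) \<noteq> (snd (ep j) \<in> S)"
        proof (rule ccontr)
          assume nc: "\<not> (\<exists>j\<in>C. (fst (ep j) \<in> S) \<noteq> (snd (ep j) \<in> S))"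
          have "S0 \<subseteq> S"
          proof
            fix x assume "x \<in> S0"
            then show "x \<in> S" unfolding S0_def
              by (rule reach_sub[OF _ uS]) (use nc in \<open>auto simp: C_def S0_def\<close>)
          qed
          then show False using ex Cboth by blast
        qed
      qed
      have cardC: "card C < card I" using CD II by (metis card_mono card_insert_disjoint le_imp_less_Suc)
      have cardD: "card D < card I" using CD II by (metis card_mono card_insert_disjoint le_imp_less_Suc)
      from IH[OF cardC CD(3) oddC' cutC] obtain ws2 where
        ws2: "distinct (map fst ws2)" "set (map fst ws2) = C" "wend ep u ws2 = Some t" by blast
      have step: "wend ep s ((i,d)#ws2) = Some t" using sd ws2(3) by (simp add: u_def)
      show ?thesis
      proof (cases "s \<in> S0")
        case True
        have "D = {}"
        proof (rule ccontr)
          assume "D \<noteq> {}"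
          then obtain j where j: "j \<in> D" by auto
          have "\<exists>j\<in>I. fst (ep j) \<notin> S0 \<or> snd (ep j) \<notin> S0" using j Dboth CD II by auto
          then obtain k where k: "k \<in> I" "(fst (ep k) \<in> S0) \<noteq> (snd (ep k) \<in> S0)"
            using less.prems(3) True unfolding cut_def by blast
          have "k \<noteq> i" using k epi True uS0 by auto
          then have "k \<in> C \<or> k \<in> D" using k CD II by auto
          then show False using k Cboth Dboth by blast
        qed
        then have "C = I'" using CD by auto
        then show ?thesis
          by (intro exI[of _ "(i,d)#ws2"]) (use ws2 step II in auto)
      next
        case False
        have cutD: "cut ep D s"
          unfolding cut_def
        proof (intro allI impI)
          fix S assume sS: "s \<in> S" and ex: "\<exists>j\<in>D. fst (ep j) \<notin> S \<or> snd (ep j) \<notin> S"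
          then obtain j where j: "j \<in> D" "fst (ep j) \<notin> S \<or> snd (ep j) \<notin> S" by auto
          have "fst (ep j) \<notin> S \<union> S0 \<or> snd (ep j) \<notin> S \<union> S0" using j Dboth by auto
          then have "\<exists>j\<in>I. fst (ep j) \<notin> S \<union> S0 \<or> snd (ep j) \<notin> S \<union> S0" using j CD II by auto
          then obtain k where k: "k \<in> I" "(fst (ep k) \<in> S \<union> S0) \<noteq> (snd (ep k) \<in> S \<union> S0)"
            using less.prems(3) sS unfolding cut_def by blast
          have "k \<noteq> i" using k epi sS uS0 by auto
          then have "k \<in> C \<or> k \<in> D" using k CD II by auto
          then have "k \<in> D" using k Cboth by auto
          then show "\<exists>j\<in>D. (fst (ep j) \<in> S) \<noteq> (snd (ep j) \<in> S)" using k Dboth by auto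
        qed
        from IH[OF cardD CD(4) oddD' cutD] obtain ws1 where
          ws1: "distinct (map fst ws1)" "set (map fst ws1) = D" "wend ep s ws1 = Some s" by blast
        show ?thesis
        proof (intro exI[of _ "ws1 @ (i,d) # ws2"] conjI)
          show "distinct (map fst (ws1 @ (i, d) # ws2))"
            using ws1 ws2 CD II by auto
          show "set (map fst (ws1 @ (i, d) # ws2)) = I"
            using ws1 ws2 CD II by auto
          show "wend ep s (ws1 @ (i, d) # ws2) = Some t"
            using ws1(3) step by (simp add: wend_append del: wend.simps(2))
        qed
      qed
    qed
  qed
qed

definition ep :: "('a, 'b) monoid_scheme \<Rightarrow> (nat \<Rightarrow> 'a \<times> 'a) \<Rightarrow> nat \<Rightarrow> 'a \<times> 'a" where
  "ep G m = (\<lambda>i. (snd (m i), snd (m i) \<otimes>\<^bsub>G\<^esub> fst (m i)))"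

definition Mn :: "('a, 'b) monoid_scheme \<Rightarrow> nat \<Rightarrow> (nat \<Rightarrow> 'a \<times> 'a) set" where
  "Mn G n = PiE {1..n} (\<lambda>_. carrier G \<times> carrier G)"

definition Good :: "('a, 'b) monoid_scheme \<Rightarrow> nat \<Rightarrow> ('a \<times> (nat \<Rightarrow> 'a \<times> 'a)) set" where
  "Good G n = Sigma (carrier G) (\<lambda>t. {m \<in> Mn G n. oddset (ep G m) {1..n} = toggle \<one>\<^bsub>G\<^esub> {t}})"

definition Rich :: "('a, 'b) monoid_scheme \<Rightarrow> nat \<Rightarrow> (nat \<Rightarrow> 'a \<times> 'a) \<Rightarrow> bool" where
  "Rich G n m \<longleftrightarrow> (\<forall>x\<in>carrier G. \<forall>y\<in>carrier G. x \<noteq> y \<longrightarrow> (\<exists>i\<in>{1..n}. m i = (inv\<^bsub>G\<^esub> x \<otimes>\<^bsub>G\<^esub> y, x)))"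

context group begin

lemma trl_odd:
  "p \<in> carrier G \<Longrightarrow> \<forall>l\<in>set w. fst (snd l) \<in> carrier G \<Longrightarrow> distinct (map fst w) \<Longrightarrow>
   oddset (ep G (snd (trl G p w))) (fst ` set w) = toggle p {fst (trl G p w)}"
proof (induction w arbitrary: p)
  case Nil then show ?case by (simp add: toggle_def)
next
  case (Cons l w)
  obtain i g s where l: "l = (i,g,s)" by (cases l) auto
  have g: "g \<in> carrier G" using Cons.prems l by auto
  define q where "q = (if s then p \<otimes> inv g else p \<otimes> g)"
  have q: "q \<in> carrier G" using g Cons.prems by (auto simp: q_def)
  define m' where "m' = snd (trl G q w)"
  define c where "c = (if s then q else p)"
  have tr: "trl G p (l#w) = (fst (trl G q w), m'(i := (g, c)))"
    by (simp add: l q_def Let_def m'_def c_def)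
  have ni: "i \<notin> fst ` set w" using Cons.prems(3) l by auto
  have IH: "oddset (ep G m') (fst ` set w) = toggle q {fst (trl G q w)}"
    using Cons.IH[OF q] Cons.prems l by (auto simp: m'_def)
  have cong: "oddset (ep G (m'(i := (g, c)))) (fst ` set w) = oddset (ep G m') (fst ` set w)"
    using ni by (intro oddset_cong) (auto simp: ep_def)
  have epi: "ep G (m'(i := (g, c))) i = (c, c \<otimes> g)" by (simp add: ep_def)
  have tg: "toggle c (toggle (c \<otimes> g) (toggle q X)) = toggle p X" for X
  proof (cases s)
    case True
    have "c \<otimes> g = p" using g Cons.prems(1) True by (simp add: c_def q_def m_assoc)
    then show ?thesis using True by (simp add: c_def toggle_comm[of q p])
  next
    case False
    then show ?thesis by (simp add: c_def q_def)
  qed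
  have "oddset (ep G (m'(i := (g, c)))) (fst ` set (l#w))
      = oddset (ep G (m'(i := (g, c)))) (insert i (fst ` set w))" by (simp add: l)
  also have "\<dots> = toggle c (toggle (c \<otimes> g) (toggle q {fst (trl G q w)}))"
    by (simp add: oddset_insert[OF _ ni] epi cong IH)
  also have "\<dots> = toggle p {fst (trl G q w)}" by (rule tg)
  finally have X: "oddset (ep G (m'(i := (g, c)))) (fst ` set (l#w)) = toggle p {fst (trl G q w)}" .
  show ?case by (simp only: tr fst_conv snd_conv X)
qed

lemma Sg_Good:
  assumes "finite (carrier G)" shows "Sg G n \<subseteq> Good G n"
proof
  fix s assume "s \<in> Sg G n"
  then obtain w where w: "w \<in> mlmon G n" "s = trl G \<one> w" unfolding Sg_def sig_def by auto
  have gc: "\<forall>l\<in>set w. fst (snd l) \<in> carrier G" using w unfolding mlmon_def by auto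
  have d: "distinct (map fst w)" using w unfolding mlmon_def by auto
  have idx: "fst ` set w = {1..n}" using mlmon_idx[OF w(1)] .
  have t: "fst s \<in> carrier G" using trl_carrier[OF one_closed gc] w by simp
  have m: "snd s \<in> Mn G n"
    unfolding Mn_def PiE_iff extensional_def
    using trl_vals[OF one_closed gc] trl_undef[of _ w G \<one>] idx w by auto
  have o: "oddset (ep G (snd s)) {1..n} = toggle \<one> {fst s}"
    using trl_odd[OF one_closed gc d] idx w by simp
  show "s \<in> Good G n" using t m o unfolding Good_def by (cases s) auto
qed

lemma word_trl:
  "p \<in> carrier G \<Longrightarrow> (\<forall>i\<in>set (map fst ws). m i \<in> carrier G \<times> carrier G) \<Longrightarrow>
   wend (ep G m) p ws = Some t \<Longrightarrow>
   trl G p (map (\<lambda>(i,d). (i, fst (m i), d)) ws) = (t, \<lambda>i. if i \<in> set (map fst ws) then m i else undefined)"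
proof (induction ws arbitrary: p)
  case Nil then show ?case by (auto simp: fun_eq_iff)
next
  case (Cons a ws)
  obtain i d where a: "a = (i, d)" by (cases a) auto
  obtain g c where mi: "m i = (g, c)" by (cases "m i") auto
  have gc: "g \<in> carrier G" "c \<in> carrier G" using Cons.prems(2) a mi by auto
  have epi: "ep G m i = (c, c \<otimes> g)" by (simp add: ep_def mi)
  define q where "q = (if d then c else c \<otimes> g)"
  have start: "(if d then c \<otimes> g else c) = p" and we: "wend (ep G m) q ws = Some t"
    using Cons.prems(3) by (auto simp: a epi q_def split: if_splits)
  have q1: "(if d then p \<otimes> inv g else p \<otimes> g) = q"
    using start gc by (auto simp: q_def m_assoc)
  have q2: "(if d then q else p) = c" using start by (auto simp: q_def)
  have qc: "q \<in> carrier G" using gc by (simp add: q_def)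
  have IH: "trl G q (map (\<lambda>(i,d). (i, fst (m i), d)) ws) = (t, \<lambda>i. if i \<in> set (map fst ws) then m i else undefined)"
    using Cons.IH[OF qc _ we] Cons.prems(2) by auto
  show ?case
    using IH q1 q2 by (auto simp: a mi Let_def fun_eq_iff)
qed

lemma Rich_cut:
  assumes m: "m \<in> Mn G n" and R: "Rich G n m"
  shows "cut (ep G m) {1..n} \<one>"
  unfolding cut_def
proof (intro allI impI)
  fix S assume oS: "\<one> \<in> S" and ex: "\<exists>i\<in>{1..n}. fst (ep G m i) \<notin> S \<or> snd (ep G m i) \<notin> S"
  then obtain j y where j: "j \<in> {1..n}" "y \<notin> S" "y = fst (ep G m j) \<or> y = snd (ep G m j)" by auto
  have "m j \<in> carrier G \<times> carrier G" using m j(1) unfolding Mn_def by (auto simp: PiE_iff)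
  then have y: "y \<in> carrier G" using j by (auto simp: ep_def)
  have "\<one> \<noteq> y" using oS j by auto
  then obtain i where i: "i \<in> {1..n}" "m i = (inv \<one> \<otimes> y, \<one>)" using R y unfolding Rich_def by blast
  have "ep G m i = (\<one>, y)" using i y by (simp add: ep_def)
  then have "(fst (ep G m i) \<in> S) \<noteq> (snd (ep G m i) \<in> S)" using oS j(2) by simp
  then show "\<exists>i\<in>{1..n}. (fst (ep G m i) \<in> S) \<noteq> (snd (ep G m i) \<in> S)" using i(1) by blast
qed

lemma Good_Rich_Sg:
  assumes "(t, m) \<in> Good G n" "Rich G n m"
  shows "(t, m) \<in> Sg G n"
proof -
  have t: "t \<in> carrier G" and m: "m \<in> Mn G n" and o: "oddset (ep G m) {1..n} = toggle \<one> {t}"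
    using assms(1) unfolding Good_def by auto
  obtain ws where ws: "distinct (map fst ws)" "set (map fst ws) = {1..n}" "wend (ep G m) \<one> ws = Some t"
    using euler[OF _ o Rich_cut[OF m assms(2)]] by auto
  define w where "w = map (\<lambda>(i,d). (i, fst (m i), d)) ws"
  have mv: "\<forall>i\<in>set (map fst ws). m i \<in> carrier G \<times> carrier G" using m ws(2) unfolding Mn_def by auto
  have tr: "trl G \<one> w = (t, \<lambda>i. if i \<in> {1..n} then m i else undefined)"
    using word_trl[OF one_closed mv ws(3)] ws(2) by (simp add: w_def)
  have me: "(\<lambda>i. if i \<in> {1..n} then m i else undefined) = m"
    using m unfolding Mn_def PiE_iff extensional_def by auto
  have mapw: "map fst w = map fst ws" unfolding w_def by (induction ws) auto
  have "distinct (map fst w)" "set (map fst w) = {1..n}" using mapw ws by simp_all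
  moreover have "\<forall>l\<in>set w. fst (snd l) \<in> carrier G"
  proof
    fix l assume "l \<in> set w"
    then obtain i d where id: "(i,d) \<in> set ws" "l = (i, fst (m i), d)" by (auto simp: w_def)
    have "i \<in> set (map fst ws)" using id(1) by force
    then show "fst (snd l) \<in> carrier G" using mv id(2) by auto
  qed
  ultimately have "w \<in> mlmon G n" unfolding mlmon_def by simp
  then show ?thesis using tr me unfolding Sg_def sig_def by force
qed

end

definition chi :: "'a set \<Rightarrow> 'a set \<Rightarrow> int" where
  "chi S U = (\<Prod>x\<in>S. if x \<in> U then -1 else 1)"

definition eps :: "'a set \<Rightarrow> 'a \<Rightarrow> int" where
  "eps S a = (if a \<in> S then -1 else 1)"

lemma chi_toggle:
  assumes "finite S"
  shows "chi S (toggle a U) = chi S U * eps S a"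
proof (cases "a \<in> S")
  case False
  then show ?thesis unfolding chi_def eps_def
    by (simp, intro prod.cong) (auto simp: mem_toggle)
next
  case True
  have "chi S (toggle a U) = (if a \<in> toggle a U then -1 else 1) * (\<Prod>x\<in>S - {a}. if x \<in> toggle a U then -1 else 1)"
    unfolding chi_def by (rule prod.remove[OF assms True])
  also have "(\<Prod>x\<in>S - {a}. if x \<in> toggle a U then -1 else 1) = (\<Prod>x\<in>S - {a}. if x \<in> U then -1 else (1::int))"
    by (intro prod.cong) (auto simp: mem_toggle)
  also have "chi S U = (if a \<in> U then -1 else 1) * (\<Prod>x\<in>S - {a}. if x \<in> U then -1 else 1)"
    unfolding chi_def by (rule prod.remove[OF assms True])
  ultimately show ?thesis using True by (auto simp: eps_def mem_toggle)
qed

lemma sum_eps: "finite A \<Longrightarrow> S \<subseteq> A \<Longrightarrow> (\<Sum>a\<in>A. eps S a) = int (card A) - 2 * int (card S)"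
proof -
  assume f: "finite A" and s: "S \<subseteq> A"
  have "(\<Sum>a\<in>A. eps S a) = (\<Sum>a\<in>A. (1::int) - (if a \<in> S then 2 else 0))"
    unfolding eps_def by (intro sum.cong) auto
  also have "\<dots> = (\<Sum>a\<in>A. (1::int)) - (\<Sum>a\<in>A. if a \<in> S then 2 else 0)"
    by (rule sum_subtractf)
  also have "(\<Sum>a\<in>A. if a \<in> S then (2::int) else 0) = 2 * int (card S)"
    using f s by (simp add: sum.If_cases Int_absorb1)
  finally show ?thesis by simp
qed

lemma sum_chi:
  assumes "finite A" "U \<subseteq> A"
  shows "(\<Sum>S\<in>Pow A. chi S U) = (if U = {} then 2 ^ card A else 0)"
proof -
  have "(\<Prod>x\<in>A. (if x \<in> U then -1 else 1) + 1) = (\<Sum>S\<in>Pow A. chi S U * (\<Prod>x\<in>A - S. (1::int)))"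
    unfolding chi_def by (rule prod_add[OF assms(1)])
  moreover have "(\<Prod>x\<in>A. (if x \<in> U then -1 else 1) + (1::int)) = (\<Prod>x\<in>A. if x \<in> U then 0 else 2)"
    by (intro prod.cong) auto
  moreover have "(\<Sum>S\<in>Pow A. chi S U * (\<Prod>x\<in>A - S. (1::int))) = (\<Sum>S\<in>Pow A. chi S U)" by simp
  ultimately have e: "(\<Sum>S\<in>Pow A. chi S U) = (\<Prod>x\<in>A. (if x \<in> U then 0 else 2::int))"
    by simp
  show ?thesis
  proof (cases "U = {}")
    case True then show ?thesis using e by simp
  next
    case False
    then obtain u where "u \<in> U" by auto
    then have "u \<in> A" using assms by auto
    then show ?thesis using e False \<open>u \<in> U\<close> assms(1)
      by (auto intro: prod_zero bexI[of _ u])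
  qed
qed

definition Nc :: "('a, 'b) monoid_scheme \<Rightarrow> nat \<Rightarrow> 'a set \<Rightarrow> nat" where
  "Nc G n U = card {m \<in> Mn G n. oddset (ep G m) {1..n} = U}"

context group begin

lemma inv_cancel1: "a \<in> carrier G \<Longrightarrow> b \<in> carrier G \<Longrightarrow> inv a \<otimes> (a \<otimes> b) = b"
  by (simp add: m_assoc[symmetric])
lemma inv_cancel2: "a \<in> carrier G \<Longrightarrow> b \<in> carrier G \<Longrightarrow> a \<otimes> (inv a \<otimes> b) = b"
  by (simp add: m_assoc[symmetric])

lemma Mn_finite: "finite (carrier G) \<Longrightarrow> finite (Mn G n)"
  unfolding Mn_def by (intro finite_PiE) auto

lemma Nc_rec:
  assumes fin: "finite (carrier G)"
  shows "Nc G (Suc n) U = (\<Sum>v\<in>carrier G \<times> carrier G. Nc G n (toggle (snd v \<otimes> fst v) (toggle (snd v) U)))"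
proof -
  let ?T = "\<lambda>_::nat. carrier G \<times> carrier G"
  let ?f = "\<lambda>(y, g). g(Suc n := y)"
  have ins: "{1..Suc n} = insert (Suc n) {1..n}" by auto
  have nin: "Suc n \<notin> {1..n}" by simp
  have od: "oddset (ep G (g(Suc n := y))) {1..Suc n} = toggle (snd y) (toggle (snd y \<otimes> fst y) (oddset (ep G g) {1..n}))" for g y
  proof -
    have "oddset (ep G (g(Suc n := y))) {1..n} = oddset (ep G g) {1..n}"
      by (intro oddset_cong) (auto simp: ep_def)
    moreover have "oddset (ep G (g(Suc n := y))) (insert (Suc n) {1..n}) = toggle (fst (ep G (g(Suc n:=y)) (Suc n))) (toggle (snd (ep G (g(Suc n:=y)) (Suc n))) (oddset (ep G (g(Suc n := y))) {1..n}))"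
      by (rule oddset_insert[OF _ nin]) simp
    moreover have "ep G (g(Suc n:=y)) (Suc n) = (snd y, snd y \<otimes> fst y)" by (simp add: ep_def)
    ultimately show ?thesis unfolding ins by simp
  qed
  have iff: "(toggle (snd y) (toggle (snd y \<otimes> fst y) X) = U) \<longleftrightarrow> (X = toggle (snd y \<otimes> fst y) (toggle (snd y) U))" for y X
    by (metis toggle_toggle)
  have iff2: "(oddset (ep G (?f yg)) {1..Suc n} = U) \<longleftrightarrow> (oddset (ep G (snd yg)) {1..n} = toggle (snd (fst yg) \<otimes> fst (fst yg)) (toggle (snd (fst yg)) U))" for yg
  proof (cases yg)
    case (Pair y g)
    show ?thesis unfolding Pair using od[of g y] iff[of y "oddset (ep G g) {1..n}"] by simp
  qed
  have "{m \<in> Mn G (Suc n). oddset (ep G m) {1..Suc n} = U} = ?f ` {yg \<in> ?T (Suc n) \<times> Mn G n. oddset (ep G (?f yg)) {1..Suc n} = U}"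
    unfolding Mn_def ins PiE_insert_eq by auto
  also have "card \<dots> = card {yg \<in> ?T (Suc n) \<times> Mn G n. oddset (ep G (?f yg)) {1..Suc n} = U}"
    by (rule card_image, rule inj_on_subset[OF inj_combinator[OF nin]]) (auto simp: Mn_def)
  also have "{yg \<in> ?T (Suc n) \<times> Mn G n. oddset (ep G (?f yg)) {1..Suc n} = U}
       = Sigma (carrier G \<times> carrier G) (\<lambda>y. {g \<in> Mn G n. oddset (ep G g) {1..n} = toggle (snd y \<otimes> fst y) (toggle (snd y) U)})"
    unfolding iff2 by auto
  also have "card \<dots> = (\<Sum>v\<in>carrier G \<times> carrier G. Nc G n (toggle (snd v \<otimes> fst v) (toggle (snd v) U)))"
    using fin Mn_finite[OF fin] by (simp add: Nc_def)
  finally show ?thesis unfolding Nc_def .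
qed

lemma Nc_rec2:
  assumes fin: "finite (carrier G)"
  shows "Nc G (Suc n) U = (\<Sum>a\<in>carrier G. \<Sum>b\<in>carrier G. Nc G n (toggle b (toggle a U)))"
proof -
  let ?h = "\<lambda>v. (snd v, snd v \<otimes> fst v)"
  have bij: "bij_betw ?h (carrier G \<times> carrier G) (carrier G \<times> carrier G)"
  proof (rule bij_betw_byWitness[where f' = "\<lambda>(a,b). (inv a \<otimes> b, a)"])
    show "\<forall>x\<in>carrier G \<times> carrier G. (\<lambda>(a, b). (inv a \<otimes> b, a)) (?h x) = x"
      by (auto simp: inv_cancel1)
    show "\<forall>y\<in>carrier G \<times> carrier G. ?h ((\<lambda>(a, b). (inv a \<otimes> b, a)) y) = y"
      by (auto simp: inv_cancel2)
  qed auto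
  have "Nc G (Suc n) U = (\<Sum>v\<in>carrier G \<times> carrier G. (\<lambda>(a,b). Nc G n (toggle b (toggle a U))) (?h v))"
    unfolding Nc_rec[OF fin] by (simp add: case_prod_unfold)
  also have "\<dots> = (\<Sum>v\<in>carrier G \<times> carrier G. (\<lambda>(a,b). Nc G n (toggle b (toggle a U))) v)"
    by (rule sum.reindex_bij_betw[OF bij])
  also have "\<dots> = (\<Sum>a\<in>carrier G. \<Sum>b\<in>carrier G. Nc G n (toggle b (toggle a U)))"
    by (simp add: sum.cartesian_product)
  finally show ?thesis .
qed

lemma Nc_closed:
  assumes fin: "finite (carrier G)"
  shows "U \<subseteq> carrier G \<Longrightarrow> 2 ^ card (carrier G) * int (Nc G n U) =
     (\<Sum>S\<in>Pow (carrier G). chi S U * (int (card (carrier G)) - 2 * int (card S)) ^ (2 * n))"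
proof (induction n arbitrary: U)
  case 0
  have "Mn G 0 = {\<lambda>_. undefined}" by (simp add: Mn_def)
  then have "Nc G 0 U = (if U = {} then 1 else 0)" by (auto simp: Nc_def)
  then show ?case using sum_chi[OF fin 0] by simp
next
  case (Suc n)
  let ?k = "int (card (carrier G))"
  have sub: "toggle b (toggle a U) \<subseteq> carrier G" if "a \<in> carrier G" "b \<in> carrier G" for a b
    using Suc.prems that by (auto simp: toggle_def)
  have "2 ^ card (carrier G) * int (Nc G (Suc n) U)
     = (\<Sum>a\<in>carrier G. \<Sum>b\<in>carrier G. 2 ^ card (carrier G) * int (Nc G n (toggle b (toggle a U))))"
    unfolding Nc_rec2[OF fin] by (simp add: sum_distrib_left)
  also have "\<dots> = (\<Sum>a\<in>carrier G. \<Sum>b\<in>carrier G. \<Sum>S\<in>Pow (carrier G). chi S U * eps S a * eps S b * (?k - 2 * int (card S)) ^ (2 * n))"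
  proof (intro sum.cong refl)
    fix a b assume ab: "a \<in> carrier G" "b \<in> carrier G"
    show "2 ^ card (carrier G) * int (Nc G n (toggle b (toggle a U))) =
      (\<Sum>S\<in>Pow (carrier G). chi S U * eps S a * eps S b * (?k - 2 * int (card S)) ^ (2 * n))"
      unfolding Suc.IH[OF sub[OF ab]]
      by (intro sum.cong refl) (simp add: chi_toggle finite_subset[OF _ fin])
  qed
  also have "\<dots> = (\<Sum>S\<in>Pow (carrier G). chi S U * (?k - 2 * int (card S)) ^ (2 * n) * ((\<Sum>a\<in>carrier G. eps S a) * (\<Sum>b\<in>carrier G. eps S b)))"
  proof -
    let ?F = "\<lambda>a b S. chi S U * eps S a * eps S b * (?k - 2 * int (card S)) ^ (2 * n)"
    have "(\<Sum>a\<in>carrier G. \<Sum>b\<in>carrier G. \<Sum>S\<in>Pow (carrier G). ?F a b S)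
        = (\<Sum>a\<in>carrier G. \<Sum>S\<in>Pow (carrier G). \<Sum>b\<in>carrier G. ?F a b S)"
      by (intro sum.cong refl) (rule sum.swap)
    also have "\<dots> = (\<Sum>S\<in>Pow (carrier G). \<Sum>a\<in>carrier G. \<Sum>b\<in>carrier G. ?F a b S)"
      by (rule sum.swap)
    also have "\<dots> = (\<Sum>S\<in>Pow (carrier G). chi S U * (?k - 2 * int (card S)) ^ (2 * n) * ((\<Sum>a\<in>carrier G. eps S a) * (\<Sum>b\<in>carrier G. eps S b)))"
    proof (intro sum.cong refl)
      fix S
      show "(\<Sum>a\<in>carrier G. \<Sum>b\<in>carrier G. ?F a b S) = chi S U * (?k - 2 * int (card S)) ^ (2 * n) * ((\<Sum>a\<in>carrier G. eps S a) * (\<Sum>b\<in>carrier G. eps S b))"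
        unfolding sum_product sum_distrib_left by (intro sum.cong refl) (simp add: algebra_simps, simp only: sum_distrib_left sum_distrib_right)
    qed
    finally show ?thesis .
  qed
  also have "\<dots> = (\<Sum>S\<in>Pow (carrier G). chi S U * (?k - 2 * int (card S)) ^ (2 * Suc n))"
    by (intro sum.cong refl) (simp add: sum_eps[OF fin] power2_eq_square[symmetric] power_add[symmetric])
  finally show ?case .
qed

end

lemma abs_chi: "finite S \<Longrightarrow> \<bar>chi S U\<bar> = 1"
  unfolding chi_def by (induction S rule: finite_induct) (simp_all add: abs_mult)

lemma chi_full: "finite A \<Longrightarrow> U \<subseteq> A \<Longrightarrow> chi A U = (-1) ^ card U"
proof -
  assume f: "finite A" and u: "U \<subseteq> A"
  have "chi A U = (\<Prod>x\<in>A \<inter> {x. x \<in> U}. -1) * (\<Prod>x\<in>A \<inter> - {x. x \<in> U}. 1)"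
    unfolding chi_def by (rule prod.If_cases[OF f])
  also have "A \<inter> {x. x \<in> U} = U" using u by auto
  finally show ?thesis by simp
qed

context group begin

lemma Nc_bound:
  assumes fin: "finite (carrier G)" and U: "U \<subseteq> carrier G" "even (card U)"
  shows "\<bar>2 ^ card (carrier G) * int (Nc G n U) - 2 * int (card (carrier G)) ^ (2 * n)\<bar>
         \<le> 2 ^ card (carrier G) * (int (card (carrier G)) - 2) ^ (2 * n)"
proof -
  let ?A = "carrier G" let ?k = "int (card (carrier G))"
  let ?t = "\<lambda>S. chi S U * (?k - 2 * int (card S)) ^ (2 * n)"
  have ne: "{} \<noteq> ?A" using one_closed by blast
  have kpos: "card ?A \<ge> 1" using fin ne by (metis One_nat_def Suc_leI card_gt_0_iff)
  define R where "R = Pow ?A - {{}, ?A}"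
  have PR: "Pow ?A = insert {} (insert ?A R)" "{} \<notin> insert ?A R" "?A \<notin> R" "finite R"
    using ne fin by (auto simp: R_def)
  have "(\<Sum>S\<in>Pow ?A. ?t S) = ?t {} + (?t ?A + (\<Sum>S\<in>R. ?t S))"
    unfolding PR(1) using PR by (simp add: sum.insert)
  also have "?t {} = ?k ^ (2 * n)" by (simp add: chi_def)
  also have "?t ?A = ?k ^ (2 * n)"
  proof -
    have "(?k - 2 * ?k) ^ (2 * n) = ?k ^ (2 * n)" by (simp add: power_mult)
    then show ?thesis using chi_full[OF fin U(1)] U(2) by simp
  qed
  finally have eq: "2 ^ card ?A * int (Nc G n U) - 2 * ?k ^ (2 * n) = (\<Sum>S\<in>R. ?t S)"
    using Nc_closed[OF fin U(1)] by simp
  have tb: "\<bar>?t S\<bar> \<le> (?k - 2) ^ (2 * n)" if S: "S \<in> R" for S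
  proof -
    have Ss: "S \<subseteq> ?A" "S \<noteq> {}" "S \<noteq> ?A" using S by (auto simp: R_def)
    have fS: "finite S" using Ss(1) fin by (rule finite_subset)
    have c1: "card S \<ge> 1" using Ss fS by (metis One_nat_def Suc_leI card_gt_0_iff)
    have c2: "card S < card ?A" using Ss fin by (meson psubset_card_mono psubsetI)
    have "\<bar>?k - 2 * int (card S)\<bar> \<le> ?k - 2" using c1 c2 by linarith
    then have "\<bar>?k - 2 * int (card S)\<bar> ^ (2 * n) \<le> (?k - 2) ^ (2 * n)"
      by (rule power_mono) simp
    then show ?thesis by (simp add: abs_mult abs_chi[OF fS] power_abs)
  qed
  have "\<bar>\<Sum>S\<in>R. ?t S\<bar> \<le> (\<Sum>S\<in>R. \<bar>?t S\<bar>)" by (rule sum_abs)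
  also have "\<dots> \<le> (\<Sum>S\<in>R. (?k - 2) ^ (2 * n))" by (rule sum_mono) (rule tb)
  also have "\<dots> = int (card R) * (?k - 2) ^ (2 * n)" by simp
  also have "\<dots> \<le> 2 ^ card ?A * (?k - 2) ^ (2 * n)"
  proof (rule mult_right_mono)
    have "card R \<le> card (Pow ?A)" using fin by (intro card_mono) (auto simp: R_def)
    then show "int (card R) \<le> 2 ^ card ?A" using fin by (simp add: card_Pow)
    show "0 \<le> (?k - 2) ^ (2 * n)" by (simp add: power_even_eq)
  qed
  finally show ?thesis using eq by simp
qed

lemma card_Good:
  assumes fin: "finite (carrier G)"
  shows "card (Good G n) = (\<Sum>t\<in>carrier G. Nc G n (toggle \<one> {t}))"
  unfolding Good_def Nc_def using fin Mn_finite[OF fin] by simp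

lemma toggle_one: "t \<in> carrier G \<Longrightarrow> toggle \<one> {t} \<subseteq> carrier G \<and> even (card (toggle \<one> {t}))"
  by (auto simp: toggle_def)

lemma card_bad:
  assumes fin: "finite (carrier G)"
  shows "card {m \<in> Mn G n. \<not> Rich G n m} \<le> card (carrier G) ^ 2 * (card (carrier G) ^ 2 - 1) ^ n"
proof -
  let ?A = "carrier G \<times> carrier G"
  let ?B = "\<lambda>v. PiE {1..n} (\<lambda>_. ?A - {(inv (fst v) \<otimes> snd v, fst v)})"
  have sub: "{m \<in> Mn G n. \<not> Rich G n m} \<subseteq> (\<Union>v\<in>?A. ?B v)"
  proof
    fix m assume "m \<in> {m \<in> Mn G n. \<not> Rich G n m}"
    then have m: "m \<in> Mn G n" and nr: "\<not> Rich G n m" by auto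
    then obtain x y where xy: "x \<in> carrier G" "y \<in> carrier G" "\<forall>i\<in>{1..n}. m i \<noteq> (inv x \<otimes> y, x)"
      unfolding Rich_def by blast
    have "m \<in> ?B (x, y)" using m xy unfolding Mn_def by (auto simp: PiE_iff)
    then show "m \<in> (\<Union>v\<in>?A. ?B v)" using xy by blast
  qed
  have cB: "card (?B v) = (card (carrier G) ^ 2 - 1) ^ n" if "v \<in> ?A" for v
  proof -
    have "(inv (fst v) \<otimes> snd v, fst v) \<in> ?A" using that by auto
    then have "card (?A - {(inv (fst v) \<otimes> snd v, fst v)}) = card (carrier G) ^ 2 - 1"
      using fin by (simp add: card_Diff_singleton card_cartesian_product power2_eq_square)
    then show ?thesis by (simp add: card_PiE)
  qed
  have "card {m \<in> Mn G n. \<not> Rich G n m} \<le> card (\<Union>v\<in>?A. ?B v)"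
    by (rule card_mono[OF _ sub]) (use fin in \<open>auto intro!: finite_PiE\<close>)
  also have "\<dots> \<le> (\<Sum>v\<in>?A. card (?B v))" by (rule card_UN_le) (use fin in auto)
  also have "\<dots> = card ?A * (card (carrier G) ^ 2 - 1) ^ n" using cB by simp
  also have "card ?A = card (carrier G) ^ 2" by (simp add: card_cartesian_product power2_eq_square)
  finally show ?thesis .
qed

lemma Sg_lower:
  assumes fin: "finite (carrier G)"
  shows "card (Good G n) \<le> card (Sg G n) + card (carrier G) * (card (carrier G) ^ 2 * (card (carrier G) ^ 2 - 1) ^ n)"
proof -
  let ?bad = "{m \<in> Mn G n. \<not> Rich G n m}"
  have "Good G n \<subseteq> Sg G n \<union> carrier G \<times> ?bad"
  proof
    fix s assume s: "s \<in> Good G n"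
    obtain t m where tm: "s = (t, m)" by (cases s)
    show "s \<in> Sg G n \<union> carrier G \<times> ?bad"
    proof (cases "Rich G n m")
      case True then show ?thesis using Good_Rich_Sg s tm by auto
    next
      case False then show ?thesis using s tm unfolding Good_def by auto
    qed
  qed
  then have "card (Good G n) \<le> card (Sg G n \<union> carrier G \<times> ?bad)"
    by (rule card_mono[rotated]) (use fin Mn_finite[OF fin] mlmon_finite[OF fin] in \<open>auto simp: Sg_def\<close>)
  also have "\<dots> \<le> card (Sg G n) + card (carrier G \<times> ?bad)" by (rule card_Un_le)
  also have "card (carrier G \<times> ?bad) = card (carrier G) * card ?bad" by (rule card_cartesian_product)
  also have "\<dots> \<le> card (carrier G) * (card (carrier G) ^ 2 * (card (carrier G) ^ 2 - 1) ^ n)"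
    by (rule mult_left_mono[OF card_bad[OF fin]]) simp
  finally show ?thesis by simp
qed

lemma Sg_upper:
  assumes fin: "finite (carrier G)"
  shows "card (Sg G n) \<le> card (Good G n)"
  by (rule card_mono[OF _ Sg_Good[OF fin]]) (use fin Mn_finite[OF fin] in \<open>auto simp: Good_def\<close>)

end

context group begin

lemma Good_bound:
  assumes fin: "finite (carrier G)"
  shows "\<bar>real (card (Good G n)) - real (card (carrier G)) / 2 ^ (card (carrier G) - 1) * real (card (carrier G)) ^ (2 * n)\<bar>
     \<le> real (card (carrier G)) * (real (card (carrier G)) - 2) ^ (2 * n)"
proof -
  let ?A = "carrier G" let ?k = "card (carrier G)" let ?kr = "real (card (carrier G))"
  have ne: "?A \<noteq> {}" using one_closed by blast
  have k1: "?k \<ge> 1" using fin ne by (metis One_nat_def Suc_leI card_gt_0_iff)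
  define X where "X = 2 * ?kr ^ (2 * n) / 2 ^ ?k"
  have Nb: "\<bar>real (Nc G n (toggle \<one> {t})) - X\<bar> \<le> (?kr - 2) ^ (2 * n)" if t: "t \<in> ?A" for t
  proof -
    have ib: "\<bar>2 ^ ?k * int (Nc G n (toggle \<one> {t})) - 2 * int ?k ^ (2 * n)\<bar> \<le> 2 ^ ?k * (int ?k - 2) ^ (2 * n)"
      using Nc_bound[OF fin] toggle_one[OF t] by blast
    then have rb: "\<bar>2 ^ ?k * real (Nc G n (toggle \<one> {t})) - 2 * ?kr ^ (2 * n)\<bar> \<le> 2 ^ ?k * (?kr - 2) ^ (2 * n)"
      by (metis (mono_tags, opaque_lifting) of_int_abs of_int_diff of_int_le_iff of_int_mult of_int_numeral of_int_of_nat_eq of_int_power of_nat_numeral)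
    have e: "2 ^ ?k * (real (Nc G n (toggle \<one> {t})) - X) = 2 ^ ?k * real (Nc G n (toggle \<one> {t})) - 2 * ?kr ^ (2 * n)"
      unfolding X_def by (simp add: right_diff_distrib)
    have "2 ^ ?k * \<bar>real (Nc G n (toggle \<one> {t})) - X\<bar> = \<bar>2 ^ ?k * (real (Nc G n (toggle \<one> {t})) - X)\<bar>"
      by (simp add: abs_mult)
    also note e
    finally have "2 ^ ?k * \<bar>real (Nc G n (toggle \<one> {t})) - X\<bar> = \<bar>2 ^ ?k * real (Nc G n (toggle \<one> {t})) - 2 * ?kr ^ (2 * n)\<bar>" .
    with rb have "2 ^ ?k * \<bar>real (Nc G n (toggle \<one> {t})) - X\<bar> \<le> 2 ^ ?k * (?kr - 2) ^ (2 * n)" by simp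
    then show ?thesis by simp
  qed
  have C: "?kr / 2 ^ (?k - 1) * ?kr ^ (2 * n) = ?kr * X"
  proof -
    have "(2::real) ^ ?k = 2 * 2 ^ (?k - 1)" using k1 by (metis power_Suc Suc_diff_1 less_le_trans zero_less_one)
    then show ?thesis by (simp add: X_def)
  qed
  have "real (card (Good G n)) - ?kr * X = (\<Sum>t\<in>?A. real (Nc G n (toggle \<one> {t})) - X)"
    by (simp add: card_Good[OF fin] sum_subtractf)
  then have "\<bar>real (card (Good G n)) - ?kr * X\<bar> \<le> (\<Sum>t\<in>?A. \<bar>real (Nc G n (toggle \<one> {t})) - X\<bar>)"
    using sum_abs by metis
  also have "\<dots> \<le> (\<Sum>t\<in>?A. (?kr - 2) ^ (2 * n))" by (rule sum_mono) (rule Nb)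
  also have "\<dots> = ?kr * (?kr - 2) ^ (2 * n)" by simp
  finally show ?thesis unfolding C .
qed

lemma Sg_diff:
  assumes fin: "finite (carrier G)"
  shows "\<bar>real (card (Sg G n)) - real (card (carrier G)) / 2 ^ (card (carrier G) - 1) * real (card (carrier G)) ^ (2 * n)\<bar>
     \<le> real (card (carrier G)) * (real (card (carrier G)) - 2) ^ (2 * n)
       + real (card (carrier G)) ^ 3 * (real (card (carrier G)) ^ 2 - 1) ^ n"
proof -
  let ?k = "card (carrier G)" let ?kr = "real (card (carrier G))"
  let ?g = "?kr / 2 ^ (?k - 1) * ?kr ^ (2 * n)"
  have ne: "carrier G \<noteq> {}" using one_closed by blast
  have k1: "?k \<ge> 1" using fin ne by (metis One_nat_def Suc_leI card_gt_0_iff)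
  have gb: "\<bar>real (card (Good G n)) - ?g\<bar> \<le> ?kr * (?kr - 2) ^ (2 * n)" by (rule Good_bound[OF fin])
  have up: "real (card (Sg G n)) \<le> real (card (Good G n))" using Sg_upper[OF fin] by simp
  have lo0: "card (Good G n) \<le> card (Sg G n) + ?k * (?k ^ 2 * (?k ^ 2 - 1) ^ n)" by (rule Sg_lower[OF fin])
  have h: "real (?k ^ 2 - 1) = ?kr ^ 2 - 1" using k1 by (simp add: of_nat_diff)
  have "real (card (Good G n)) \<le> real (card (Sg G n) + ?k * (?k ^ 2 * (?k ^ 2 - 1) ^ n))"
    using lo0 by (simp only: of_nat_le_iff)
  also have "\<dots> = real (card (Sg G n)) + ?kr * (?kr ^ 2 * (?kr ^ 2 - 1) ^ n)"
    by (simp only: of_nat_add of_nat_mult of_nat_power h)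
  also have "\<dots> = real (card (Sg G n)) + ?kr ^ 3 * (?kr ^ 2 - 1) ^ n"
    by (simp add: power3_eq_cube power2_eq_square)
  finally have lo: "real (card (Good G n)) \<le> real (card (Sg G n)) + ?kr ^ 3 * (?kr ^ 2 - 1) ^ n" .
  have p0: "0 \<le> ?kr ^ 3 * (?kr ^ 2 - 1) ^ n" using k1 by (simp add: power_mono)
  have p1: "0 \<le> ?kr * (?kr - 2) ^ (2 * n)" by (simp add: power_mult power_even_eq)
  show ?thesis using gb up lo p0 p1 by linarith
qed

lemma main_ratio:
  assumes fin: "finite (carrier G)" and k2: "card (carrier G) \<ge> 2"
  shows "(\<lambda>n. real (card (Sg G n)) / (real (card (carrier G)) / 2 ^ (card (carrier G) - 1) * real (card (carrier G)) ^ (2 * n))) \<longlonglongrightarrow> 1"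
proof -
  let ?k = "card (carrier G)" let ?kr = "real (card (carrier G))"
  define C where "C = ?kr / 2 ^ (?k - 1)"
  have Cpos: "C > 0" using k2 by (simp add: C_def)
  define x where "x = (?kr - 2) ^ 2 / ?kr ^ 2"
  define y where "y = (?kr ^ 2 - 1) / ?kr ^ 2"
  have kr2: "?kr \<ge> 2" using k2 by simp
  have x: "0 \<le> x" "x < 1" using kr2 by (auto simp: x_def divide_less_eq power_strict_mono)
  have kk: "?kr ^ 2 \<ge> 4" using power_mono[OF kr2, of 2] by simp
  have y: "0 \<le> y" "y < 1" using kk by (auto simp: y_def divide_less_eq)
  define e where "e = (\<lambda>n. (?kr / C) * x ^ n + (?kr ^ 3 / C) * y ^ n)"
  have e0: "e \<longlonglongrightarrow> 0"
  proof -
    have xl: "(\<lambda>n. x ^ n) \<longlonglongrightarrow> 0" by (rule LIMSEQ_power_zero) (use x in simp)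
    have yl: "(\<lambda>n. y ^ n) \<longlonglongrightarrow> 0" by (rule LIMSEQ_power_zero) (use y in simp)
    have "(\<lambda>n. (?kr / C) * x ^ n + (?kr ^ 3 / C) * y ^ n) \<longlonglongrightarrow> (?kr / C) * 0 + (?kr ^ 3 / C) * 0"
      by (rule tendsto_add[OF tendsto_mult_left[OF xl] tendsto_mult_left[OF yl]])
    then show ?thesis unfolding e_def by (simp only: mult_zero_right add_0)
  qed
  have bnd: "\<bar>real (card (Sg G n)) / (C * ?kr ^ (2 * n)) - 1\<bar> \<le> e n" for n
  proof -
    have gpos: "C * ?kr ^ (2 * n) > 0" using Cpos kr2 by simp
    have d: "\<bar>real (card (Sg G n)) - C * ?kr ^ (2 * n)\<bar> \<le> ?kr * (?kr - 2) ^ (2 * n) + ?kr ^ 3 * (?kr ^ 2 - 1) ^ n"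
      using Sg_diff[OF fin, of n] by (simp add: C_def)
    have "\<bar>real (card (Sg G n)) / (C * ?kr ^ (2 * n)) - 1\<bar> = \<bar>real (card (Sg G n)) - C * ?kr ^ (2 * n)\<bar> / (C * ?kr ^ (2 * n))"
    proof -
      have "real (card (Sg G n)) / (C * ?kr ^ (2 * n)) - 1 = (real (card (Sg G n)) - C * ?kr ^ (2 * n)) / (C * ?kr ^ (2 * n))"
        using gpos by (metis diff_divide_distrib divide_self less_irrefl)
      then show ?thesis using gpos by (simp add: abs_divide)
    qed
    also have "\<dots> \<le> (?kr * (?kr - 2) ^ (2 * n) + ?kr ^ 3 * (?kr ^ 2 - 1) ^ n) / (C * ?kr ^ (2 * n))"
      using gpos d by (simp add: divide_right_mono)
    also have "\<dots> = e n"
    proof -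
      have xn: "x ^ n = (?kr - 2) ^ (2 * n) / ?kr ^ (2 * n)" by (simp add: x_def power_divide power_mult)
      have yn: "y ^ n = (?kr ^ 2 - 1) ^ n / ?kr ^ (2 * n)" by (simp add: y_def power_divide power_mult)
      have kp: "?kr ^ (2 * n) \<noteq> 0" using kr2 by simp
      have "e n = (?kr / C) * ((?kr - 2) ^ (2 * n) / ?kr ^ (2 * n)) + (?kr ^ 3 / C) * ((?kr ^ 2 - 1) ^ n / ?kr ^ (2 * n))"
        unfolding e_def xn yn by simp
      then show ?thesis using kp Cpos by (simp add: field_simps)
    qed
    finally show ?thesis .
  qed
  have "(\<lambda>n. real (card (Sg G n)) / (C * ?kr ^ (2 * n))) \<longlonglongrightarrow> 1"
  proof (rule tendsto_sandwich[of "\<lambda>n. 1 - e n" _ _ "\<lambda>n. 1 + e n"])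
    show "\<forall>\<^sub>F n in sequentially. 1 - e n \<le> real (card (Sg G n)) / (C * ?kr ^ (2 * n))"
      using bnd by (intro always_eventually allI) (metis abs_diff_le_iff diff_le_eq le_diff_eq add.commute)
    show "\<forall>\<^sub>F n in sequentially. real (card (Sg G n)) / (C * ?kr ^ (2 * n)) \<le> 1 + e n"
      using bnd by (intro always_eventually allI) (metis abs_diff_le_iff diff_le_eq add.commute)
    show "(\<lambda>n. 1 - e n) \<longlonglongrightarrow> 1" using tendsto_diff[OF tendsto_const e0, of 1] by simp
    show "(\<lambda>n. 1 + e n) \<longlonglongrightarrow> 1" using tendsto_add[OF tendsto_const e0, of 1] by simp
  qed
  then show ?thesis by (simp add: C_def)
qed

end

theorem mainTheorem17:
  fixes G :: "('a, 'b) monoid_scheme"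
  assumes "group G" and "finite (carrier G)" and "card (carrier G) \<ge> 2"
  shows "(\<lambda>n. real (gcodim G n)) \<sim>[at_top]
         (\<lambda>n. real (card (carrier G)) / 2 ^ (card (carrier G) - 1) * real (card (carrier G)) ^ (2 * n))"
proof (rule asymp_equivI')
  interpret group G by fact
  show "((\<lambda>n. real (gcodim G n) / (real (card (carrier G)) / 2 ^ (card (carrier G) - 1) * real (card (carrier G)) ^ (2 * n))) \<longlongrightarrow> 1) at_top"
    using main_ratio[OF assms(2,3)] by (simp add: gcodim_eq[OF assms(2)])
qed

end
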